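(* Let $\mathscr{C}=\{(x,y,z)\in\mathbb{R}^3: x,y,z\ge 0,\ z\le x+y\}$. In generalized non-signalling theory (box world), every vector in $\mathscr{C}$ lies in the closure of the set of bipartite entropy vectors $(\hat H(X),\hat H(Y),\hat H(XY))$, where $X$, $Y$ range over systems of finitely many boxes and the state ranges over all states of the joint system $XY$.
   Context: Box world (GNST): a box has a finite set of inputs and outputs (a box with a single input is called classical). A system of boxes has states given by all collections $p(\mathbf{a}|\mathbf{x})\ge0$ (output tuple $\mathbf{a}$, input tuple $\mathbf{x}$) that are normalized ($\sum_{\mathbf{a}}p(\mathbf{a}|\mathbf{x})=1$) and no-signalling (for each box $i$, $\sum_{a_i}p(\mathbf{a}|\mathbf{x})$ is independent of $x_i$); reduced states are obtained by summing out the outputs of the discarded boxes. An effect is any linear map from states to $[0,1]$; a measurement is a finite set $\{(r,\mu_r)\}$ of effects summing to the constant map $1$ (all such are allowed). A measurement $N=\{(s,\nu_s)\}$ refines $M=\{(r,\mu_r)\}$ if the outcomes of $N$ can be partitioned into sets $P_r$ with $\mu_r=\sum_{s\in P_r}\nu_s$; the refinement is trivial if $\nu_s\propto\mu_r$ whenever $s\in P_r$; $M$ is maximally informative if it has no non-trivial refinement. The measurement entropy of a system $Z$ in state $\mathbf{p}$ is $\hat H(Z)=\inf_M H_M(Z)$, the infimum over maximally informative measurements $M$ on $Z$ of the Shannon entropy (base 2) of the outcome distribution $(\mu_r(\mathbf{p}))_r$. For a state of $XY$, $\hat H(X)$ and $\hat H(Y)$ are evaluated on the reduced states. *)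

theory Defs
  imports "HOL-Analysis.Analysis"
begin

text \<open>A box is a pair (number of inputs, number of outputs); inputs of a box with
 m inputs are 0..<m, outputs of a box with k outputs are 0..<k.\<close>

type_synonym box = "nat \<times> nat"

definition valid_sys :: "box list \<Rightarrow> bool" where
  "valid_sys S \<longleftrightarrow> (\<forall>b\<in>set S. 1 \<le> fst b \<and> 1 \<le> snd b)"

definition inputs :: "box list \<Rightarrow> nat list set" where
  "inputs S = {x. length x = length S \<and> (\<forall>i<length S. x ! i < fst (S ! i))}"

definition outputs :: "box list \<Rightarrow> nat list set" where
  "outputs S = {a. length a = length S \<and> (\<forall>i<length S. a ! i < snd (S ! i))}"

text \<open>A state p(a|x) is written p a x; it is set to 0 outside the valid tuples.\<close>

definition is_state :: "box list \<Rightarrow> (nat list \<Rightarrow> nat list \<Rightarrow> real) \<Rightarrow> bool" where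
  "is_state S p \<longleftrightarrow>
     (\<forall>a x. (a \<notin> outputs S \<or> x \<notin> inputs S) \<longrightarrow> p a x = 0) \<and>
     (\<forall>a\<in>outputs S. \<forall>x\<in>inputs S. 0 \<le> p a x) \<and>
     (\<forall>x\<in>inputs S. (\<Sum>a\<in>outputs S. p a x) = 1) \<and>
     (\<forall>i<length S. \<forall>x\<in>inputs S. \<forall>x'\<in>inputs S.
        (\<forall>j<length S. j \<noteq> i \<longrightarrow> x ! j = x' ! j) \<longrightarrow>
        (\<forall>a\<in>outputs S. (\<Sum>c<snd (S ! i). p (a[i := c]) x) = (\<Sum>c<snd (S ! i). p (a[i := c]) x')))"

text \<open>Linear maps on states: given by a coefficient function c,
  acting as p \<mapsto> \<Sum>_{a,x} c(a,x) p(a|x). Every linear functional on the span of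
  the states is of this form.\<close>

definition lin_apply :: "box list \<Rightarrow> (nat list \<Rightarrow> nat list \<Rightarrow> real) \<Rightarrow> (nat list \<Rightarrow> nat list \<Rightarrow> real) \<Rightarrow> real" where
  "lin_apply S c p = (\<Sum>(a, x)\<in>outputs S \<times> inputs S. c a x * p a x)"

definition is_effect :: "box list \<Rightarrow> (nat list \<Rightarrow> nat list \<Rightarrow> real) \<Rightarrow> bool" where
  "is_effect S c \<longleftrightarrow> (\<forall>p. is_state S p \<longrightarrow> 0 \<le> lin_apply S c p \<and> lin_apply S c p \<le> 1)"

definition is_measurement :: "box list \<Rightarrow> nat set \<Rightarrow> (nat \<Rightarrow> nat list \<Rightarrow> nat list \<Rightarrow> real) \<Rightarrow> bool" where
  "is_measurement S R \<mu> \<longleftrightarrow> finite R \<and> (\<forall>r\<in>R. is_effect S (\<mu> r)) \<and>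
     (\<forall>p. is_state S p \<longrightarrow> (\<Sum>r\<in>R. lin_apply S (\<mu> r) p) = 1)"

text \<open>(R', \<nu>) refines (R, \<mu>) via the partition P_r = {s \<in> R'. f s = r}.\<close>

definition refines_via :: "box list \<Rightarrow> nat set \<Rightarrow> (nat \<Rightarrow> nat list \<Rightarrow> nat list \<Rightarrow> real) \<Rightarrow> (nat \<Rightarrow> nat)
     \<Rightarrow> nat set \<Rightarrow> (nat \<Rightarrow> nat list \<Rightarrow> nat list \<Rightarrow> real) \<Rightarrow> bool" where
  "refines_via S R' \<nu> f R \<mu> \<longleftrightarrow> (\<forall>s\<in>R'. f s \<in> R) \<and>
     (\<forall>r\<in>R. \<forall>p. is_state S p \<longrightarrow>
        lin_apply S (\<mu> r) p = (\<Sum>s\<in>{s\<in>R'. f s = r}. lin_apply S (\<nu> s) p))"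

definition trivial_refinement :: "box list \<Rightarrow> nat set \<Rightarrow> (nat \<Rightarrow> nat list \<Rightarrow> nat list \<Rightarrow> real) \<Rightarrow> (nat \<Rightarrow> nat)
     \<Rightarrow> (nat \<Rightarrow> nat list \<Rightarrow> nat list \<Rightarrow> real) \<Rightarrow> bool" where
  "trivial_refinement S R' \<nu> f \<mu> \<longleftrightarrow>
     (\<forall>s\<in>R'. \<exists>t::real. \<forall>p. is_state S p \<longrightarrow> lin_apply S (\<nu> s) p = t * lin_apply S (\<mu> (f s)) p)"

definition maximally_informative :: "box list \<Rightarrow> nat set \<Rightarrow> (nat \<Rightarrow> nat list \<Rightarrow> nat list \<Rightarrow> real) \<Rightarrow> bool" where
  "maximally_informative S R \<mu> \<longleftrightarrow> is_measurement S R \<mu> \<and>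
     (\<forall>R' \<nu> f. is_measurement S R' \<nu> \<and> refines_via S R' \<nu> f R \<mu> \<longrightarrow> trivial_refinement S R' \<nu> f \<mu>)"

definition ent_term :: "real \<Rightarrow> real" where
  "ent_term q = (if q \<le> 0 then 0 else - q * log 2 q)"

definition meas_entropy :: "box list \<Rightarrow> (nat list \<Rightarrow> nat list \<Rightarrow> real) \<Rightarrow> real" where
  "meas_entropy S p = Inf {(\<Sum>r\<in>R. ent_term (lin_apply S (\<mu> r) p)) | R \<mu>. maximally_informative S R \<mu>}"

text \<open>Reduced states of a state p of the joint system SX @ SY (by no-signalling the
  choice of the inputs of the discarded boxes is irrelevant; we take all-zero inputs).\<close>

definition reduce_left :: "box list \<Rightarrow> box list \<Rightarrow> (nat list \<Rightarrow> nat list \<Rightarrow> real) \<Rightarrow> nat list \<Rightarrow> nat list \<Rightarrow> real" where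
  "reduce_left SX SY p a x = (if a \<in> outputs SX \<and> x \<in> inputs SX
     then (\<Sum>b\<in>outputs SY. p (a @ b) (x @ replicate (length SY) 0)) else 0)"

definition reduce_right :: "box list \<Rightarrow> box list \<Rightarrow> (nat list \<Rightarrow> nat list \<Rightarrow> real) \<Rightarrow> nat list \<Rightarrow> nat list \<Rightarrow> real" where
  "reduce_right SX SY p b y = (if b \<in> outputs SY \<and> y \<in> inputs SY
     then (\<Sum>a\<in>outputs SX. p (a @ b) (replicate (length SX) 0 @ y)) else 0)"

end

theory Submission
  imports Defs "HOL-Library.Nat_Bijection"
begin

lemma outputs_Nil[simp]: "outputs [] = {[]}" by (auto simp: outputs_def)
lemma inputs_Nil[simp]: "inputs [] = {[]}" by (auto simp: inputs_def)

lemma outputs_snoc_iff: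
  "a @ [c] \<in> outputs (S @ [b]) \<longleftrightarrow> a \<in> outputs S \<and> c < snd b"
proof -
  have "a @ [c] \<in> outputs (S @ [b]) \<longleftrightarrow> length a = length S \<and> (\<forall>i<Suc (length S). (a@[c])!i < snd ((S@[b])!i))"
    by (simp add: outputs_def)
  also have "\<dots> \<longleftrightarrow> length a = length S \<and> c < snd b \<and> (\<forall>i<length S. a!i < snd (S!i))"
    by (auto simp: All_less_Suc nth_append)
  finally show ?thesis by (auto simp: outputs_def)
qed

lemma inputs_snoc_iff:
  "a @ [c] \<in> inputs (S @ [b]) \<longleftrightarrow> a \<in> inputs S \<and> c < fst b"
proof -
  have "a @ [c] \<in> inputs (S @ [b]) \<longleftrightarrow> length a = length S \<and> (\<forall>i<Suc (length S). (a@[c])!i < fst ((S@[b])!i))"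
    by (simp add: inputs_def)
  also have "\<dots> \<longleftrightarrow> length a = length S \<and> c < fst b \<and> (\<forall>i<length S. a!i < fst (S!i))"
    by (auto simp: All_less_Suc nth_append)
  finally show ?thesis by (auto simp: inputs_def)
qed

lemma outputs_snoc: "outputs (S @ [b]) = (\<lambda>(a,c). a @ [c]) ` (outputs S \<times> {..<snd b})"
proof (intro set_eqI iffI)
  fix a assume a: "a \<in> outputs (S @ [b])"
  then have "a \<noteq> []" by (auto simp: outputs_def)
  then obtain a' c where "a = a' @ [c]" by (cases a rule: rev_exhaust) auto
  with a show "a \<in> (\<lambda>(a,c). a @ [c]) ` (outputs S \<times> {..<snd b})" by (auto simp: outputs_snoc_iff)
qed (auto simp: outputs_snoc_iff)

lemma inputs_snoc: "inputs (S @ [b]) = (\<lambda>(a,c). a @ [c]) ` (inputs S \<times> {..<fst b})"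
proof (intro set_eqI iffI)
  fix a assume a: "a \<in> inputs (S @ [b])"
  then have "a \<noteq> []" by (auto simp: inputs_def)
  then obtain a' c where "a = a' @ [c]" by (cases a rule: rev_exhaust) auto
  with a show "a \<in> (\<lambda>(a,c). a @ [c]) ` (inputs S \<times> {..<fst b})" by (auto simp: inputs_snoc_iff)
qed (auto simp: inputs_snoc_iff)

lemma inj_snoc: "inj_on (\<lambda>(a,c). a @ [c]) A" by (auto simp: inj_on_def)

lemma finite_outputs[simp]: "finite (outputs S)"
  by (induction S rule: rev_induct) (simp_all add: outputs_snoc)

lemma finite_inputs[simp]: "finite (inputs S)"
  by (induction S rule: rev_induct) (simp_all add: inputs_snoc)

lemma sum_outputs_snoc:
  "(\<Sum>a\<in>outputs (S@[b]). F a) = (\<Sum>a\<in>outputs S. \<Sum>c<snd b. F (a @ [c]))"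
  unfolding outputs_snoc by (subst sum.reindex[OF inj_snoc]) (simp add: sum.cartesian_product case_prod_unfold)

lemma sum_inputs_snoc:
  "(\<Sum>a\<in>inputs (S@[b]). F a) = (\<Sum>a\<in>inputs S. \<Sum>c<fst b. F (a @ [c]))"
  unfolding inputs_snoc by (subst sum.reindex[OF inj_snoc]) (simp add: sum.cartesian_product case_prod_unfold)

lemma lin_apply_alt: "lin_apply S C p = (\<Sum>a\<in>outputs S. \<Sum>x\<in>inputs S. C a x * p a x)"
  unfolding lin_apply_def by (simp add: sum.cartesian_product)

lemma lin_apply_alt2: "lin_apply S C p = (\<Sum>x\<in>inputs S. \<Sum>a\<in>outputs S. C a x * p a x)"
  unfolding lin_apply_alt by (rule sum.swap)

lemma lin_apply_snoc:
  "lin_apply (S@[b]) C p = (\<Sum>c<snd b. \<Sum>y<fst b.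
      lin_apply S (\<lambda>a x. C (a@[c]) (x@[y])) (\<lambda>a x. p (a@[c]) (x@[y])))"
proof -
  have "lin_apply (S@[b]) C p = (\<Sum>a\<in>outputs S. \<Sum>c<snd b. \<Sum>x\<in>inputs S. \<Sum>y<fst b. C (a@[c]) (x@[y]) * p (a@[c]) (x@[y]))"
    unfolding lin_apply_alt sum_outputs_snoc sum_inputs_snoc ..
  also have "\<dots> = (\<Sum>c<snd b. \<Sum>a\<in>outputs S. \<Sum>x\<in>inputs S. \<Sum>y<fst b. C (a@[c]) (x@[y]) * p (a@[c]) (x@[y]))"
    by (rule sum.swap)
  also have "\<dots> = (\<Sum>c<snd b. \<Sum>a\<in>outputs S. \<Sum>y<fst b. \<Sum>x\<in>inputs S. C (a@[c]) (x@[y]) * p (a@[c]) (x@[y]))"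
    by (intro sum.cong refl sum.swap)
  also have "\<dots> = (\<Sum>c<snd b. \<Sum>y<fst b. \<Sum>a\<in>outputs S. \<Sum>x\<in>inputs S. C (a@[c]) (x@[y]) * p (a@[c]) (x@[y]))"
    by (intro sum.cong refl sum.swap)
  finally show ?thesis by (simp only: lin_apply_alt)
qed

lemma lin_apply_sum_coef: "lin_apply S (\<lambda>a x. \<Sum>i\<in>I. C i a x) p = (\<Sum>i\<in>I. lin_apply S (C i) p)"
  unfolding lin_apply_def case_prod_unfold by (simp add: sum_distrib_right) (rule sum.swap)

lemma lin_apply_sum_state: "lin_apply S C (\<lambda>a x. \<Sum>i\<in>I. p i a x) = (\<Sum>i\<in>I. lin_apply S C (p i))"
  unfolding lin_apply_def case_prod_unfold by (simp add: sum_distrib_left) (rule sum.swap)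

lemma lin_apply_scale_state: "lin_apply S C (\<lambda>a x. t * p a x) = t * lin_apply S C p"
  unfolding lin_apply_def case_prod_unfold by (simp add: sum_distrib_left mult_ac)

lemma lin_apply_scale_coef: "lin_apply S (\<lambda>a x. t * C a x) p = t * lin_apply S C p"
  unfolding lin_apply_def case_prod_unfold by (simp add: sum_distrib_left mult_ac)

lemma lin_apply_add_coef: "lin_apply S (\<lambda>a x. C a x + D a x) p = lin_apply S C p + lin_apply S D p"
  unfolding lin_apply_def case_prod_unfold by (simp add: sum.distrib algebra_simps)

lemma lin_apply_diff_coef: "lin_apply S (\<lambda>a x. C a x - D a x) p = lin_apply S C p - lin_apply S D p"
  unfolding lin_apply_def case_prod_unfold by (simp add: sum_subtractf algebra_simps)

lemma lin_apply_cong: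
  assumes "\<And>a x. a \<in> outputs S \<Longrightarrow> x \<in> inputs S \<Longrightarrow> C a x * p a x = D a x * q a x"
  shows "lin_apply S C p = lin_apply S D q"
  unfolding lin_apply_def using assms by (intro sum.cong) auto

lemma lin_apply_zero_state: "lin_apply S C (\<lambda>a x. 0) = 0"
  unfolding lin_apply_def by simp

section \<open>Deterministic strategies\<close>

definition outf :: "(nat \<Rightarrow> nat \<Rightarrow> nat) \<Rightarrow> nat list \<Rightarrow> nat list" where
  "outf \<alpha> x = map (\<lambda>i. \<alpha> i (x!i)) [0..<length x]"

definition valid_strat :: "box list \<Rightarrow> (nat \<Rightarrow> nat \<Rightarrow> nat) \<Rightarrow> bool" where
  "valid_strat S \<alpha> \<longleftrightarrow> (\<forall>i<length S. \<forall>y<fst (S!i). \<alpha> i y < snd (S!i))"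

definition det_state :: "box list \<Rightarrow> (nat \<Rightarrow> nat \<Rightarrow> nat) \<Rightarrow> nat list \<Rightarrow> nat list \<Rightarrow> real" where
  "det_state S \<alpha> a x = (if a \<in> outputs S \<and> x \<in> inputs S \<and> a = outf \<alpha> x then 1 else 0)"

lemma length_outf[simp]: "length (outf \<alpha> x) = length x" by (simp add: outf_def)
lemma nth_outf[simp]: "i < length x \<Longrightarrow> outf \<alpha> x ! i = \<alpha> i (x!i)" by (simp add: outf_def)

lemma outf_in_outputs: "valid_strat S \<alpha> \<Longrightarrow> x \<in> inputs S \<Longrightarrow> outf \<alpha> x \<in> outputs S"
  by (auto simp: valid_strat_def inputs_def outputs_def)

lemma lin_apply_det:
  assumes "valid_strat S \<alpha>"
  shows "lin_apply S C (det_state S \<alpha>) = (\<Sum>x\<in>inputs S. C (outf \<alpha> x) x)"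
  unfolding lin_apply_alt2
proof (rule sum.cong[OF refl])
  fix x assume x: "x \<in> inputs S"
  have "(\<Sum>a\<in>outputs S. C a x * det_state S \<alpha> a x) = (\<Sum>a\<in>outputs S. if a = outf \<alpha> x then C a x else 0)"
    using x by (intro sum.cong) (auto simp: det_state_def)
  also have "\<dots> = C (outf \<alpha> x) x" using outf_in_outputs[OF assms x] by (simp add: sum.delta')
  finally show "(\<Sum>a\<in>outputs S. C a x * det_state S \<alpha> a x) = C (outf \<alpha> x) x" .
qed

lemma det_state_NS:
  assumes "valid_strat S \<alpha>" and i: "i < length S" and x: "x \<in> inputs S" and x': "x' \<in> inputs S"
    and agree: "\<forall>j<length S. j \<noteq> i \<longrightarrow> x ! j = x' ! j" and a: "a \<in> outputs S"
  shows "(\<Sum>c<snd (S ! i). det_state S \<alpha> (a[i := c]) x) = (\<Sum>c<snd (S ! i). det_state S \<alpha> (a[i := c]) x')"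
proof -
  have key: "(\<Sum>c<snd (S!i). det_state S \<alpha> (a[i:=c]) z)
     = (if \<forall>j<length S. j \<noteq> i \<longrightarrow> a!j = \<alpha> j (z!j) then 1 else 0)" if z: "z \<in> inputs S" for z
  proof -
    have lz: "length z = length S" "length a = length S" using z a by (auto simp: inputs_def outputs_def)
    have v: "\<alpha> i (z!i) < snd (S!i)" using assms z i by (auto simp: valid_strat_def inputs_def)
    have "(\<Sum>c<snd (S!i). det_state S \<alpha> (a[i:=c]) z)
        = (\<Sum>c<snd (S!i). if c = \<alpha> i (z!i) \<and> (\<forall>j<length S. j \<noteq> i \<longrightarrow> a!j = \<alpha> j (z!j)) then 1 else 0)"
    proof (intro sum.cong refl)
      fix c assume c: "c \<in> {..<snd (S!i)}"
      have mem: "a[i:=c] \<in> outputs S" using a c i by (auto simp: outputs_def nth_list_update)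
      have "a[i:=c] = outf \<alpha> z \<longleftrightarrow> c = \<alpha> i (z!i) \<and> (\<forall>j<length S. j \<noteq> i \<longrightarrow> a!j = \<alpha> j (z!j))"
        using lz i by (auto simp: list_eq_iff_nth_eq nth_list_update)
      then show "det_state S \<alpha> (a[i:=c]) z = (if c = \<alpha> i (z!i) \<and> (\<forall>j<length S. j \<noteq> i \<longrightarrow> a!j = \<alpha> j (z!j)) then 1 else 0)"
        using mem z by (simp add: det_state_def)
    qed
    also have "\<dots> = (if \<forall>j<length S. j \<noteq> i \<longrightarrow> a!j = \<alpha> j (z!j) then 1 else 0)"
    proof (cases "\<forall>j<length S. j \<noteq> i \<longrightarrow> a!j = \<alpha> j (z!j)")
      case True then show ?thesis using v by (simp add: sum.delta)
    next
      case False then show ?thesis by (intro trans[OF sum.neutral]) auto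
    qed
    finally show ?thesis .
  qed
  have "(\<forall>j<length S. j \<noteq> i \<longrightarrow> a!j = \<alpha> j (x!j)) \<longleftrightarrow> (\<forall>j<length S. j \<noteq> i \<longrightarrow> a!j = \<alpha> j (x'!j))"
    using agree by auto
  then show ?thesis unfolding key[OF x] key[OF x'] by simp
qed

lemma det_state_norm:
  assumes "valid_strat S \<alpha>" "x \<in> inputs S"
  shows "(\<Sum>a\<in>outputs S. det_state S \<alpha> a x) = 1"
proof -
  have "(\<Sum>a\<in>outputs S. det_state S \<alpha> a x) = (\<Sum>a\<in>outputs S. if a = outf \<alpha> x then 1 else 0)"
    using assms(2) by (intro sum.cong) (auto simp: det_state_def)
  also have "\<dots> = 1" using outf_in_outputs[OF assms] by (simp add: sum.delta')
  finally show ?thesis .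
qed

lemma det_state_is_state:
  assumes "valid_strat S \<alpha>"
  shows "is_state S (det_state S \<alpha>)"
proof -
  have A: "\<forall>a x. (a\<notin>outputs S \<or> x\<notin>inputs S) \<longrightarrow> det_state S \<alpha> a x = 0" by (auto simp: det_state_def)
  have B: "\<forall>a\<in>outputs S. \<forall>x\<in>inputs S. 0 \<le> det_state S \<alpha> a x" by (simp add: det_state_def)
  have C: "\<forall>x\<in>inputs S. (\<Sum>a\<in>outputs S. det_state S \<alpha> a x) = 1" using det_state_norm[OF assms] by blast
  have D: "\<forall>i<length S. \<forall>x\<in>inputs S. \<forall>x'\<in>inputs S.
        (\<forall>j<length S. j \<noteq> i \<longrightarrow> x ! j = x' ! j) \<longrightarrow>
        (\<forall>a\<in>outputs S. (\<Sum>c<snd (S ! i). det_state S \<alpha> (a[i := c]) x) = (\<Sum>c<snd (S ! i). det_state S \<alpha> (a[i := c]) x'))"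
    using det_state_NS[OF assms] by blast
  show ?thesis unfolding is_state_def by (intro conjI; fact)
qed


definition pseudo :: "box list \<Rightarrow> (nat list \<Rightarrow> nat list \<Rightarrow> real) \<Rightarrow> bool" where
 "pseudo S r \<longleftrightarrow> (\<forall>a x. (a \<notin> outputs S \<or> x \<notin> inputs S) \<longrightarrow> r a x = 0) \<and>
   (\<forall>i<length S. \<forall>x\<in>inputs S. \<forall>x'\<in>inputs S. (\<forall>j<length S. j \<noteq> i \<longrightarrow> x!j = x'!j) \<longrightarrow>
      (\<forall>a\<in>outputs S. (\<Sum>c<snd (S!i). r (a[i:=c]) x) = (\<Sum>c<snd (S!i). r (a[i:=c]) x')))"

lemma pseudo_vanish: "pseudo S r \<Longrightarrow> a \<notin> outputs S \<or> x \<notin> inputs S \<Longrightarrow> r a x = 0"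
  unfolding pseudo_def by blast

lemma pseudo_NS: "pseudo S r \<Longrightarrow> i < length S \<Longrightarrow> x \<in> inputs S \<Longrightarrow> x' \<in> inputs S \<Longrightarrow>
   (\<forall>j<length S. j \<noteq> i \<longrightarrow> x!j = x'!j) \<Longrightarrow> a \<in> outputs S \<Longrightarrow>
   (\<Sum>c<snd (S!i). r (a[i:=c]) x) = (\<Sum>c<snd (S!i). r (a[i:=c]) x')"
  unfolding pseudo_def by blast

lemma state_pseudo: "is_state S p \<Longrightarrow> pseudo S p"
  unfolding is_state_def pseudo_def by (elim conjE) (intro conjI; assumption)

lemma pseudo_sum:
  assumes "\<And>i. i \<in> I \<Longrightarrow> pseudo S (r i)"
  shows "pseudo S (\<lambda>a x. \<Sum>i\<in>I. r i a x)"
proof -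
  have A: "\<forall>a x. (a \<notin> outputs S \<or> x \<notin> inputs S) \<longrightarrow> (\<Sum>i\<in>I. r i a x) = 0"
  proof (intro allI impI)
    fix a x assume "a \<notin> outputs S \<or> x \<notin> inputs S"
    then show "(\<Sum>i\<in>I. r i a x) = 0" using assms unfolding pseudo_def by (intro sum.neutral) blast
  qed
  have B: "\<forall>k<length S. \<forall>x\<in>inputs S. \<forall>x'\<in>inputs S. (\<forall>j<length S. j \<noteq> k \<longrightarrow> x!j = x'!j) \<longrightarrow>
      (\<forall>a\<in>outputs S. (\<Sum>c<snd (S!k). \<Sum>i\<in>I. r i (a[k:=c]) x) = (\<Sum>c<snd (S!k). \<Sum>i\<in>I. r i (a[k:=c]) x'))"
  proof (intro allI impI ballI)
    fix k x x' a assume k: "k < length S" and x: "x \<in> inputs S" and x': "x' \<in> inputs S"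
      and ag: "\<forall>j<length S. j \<noteq> k \<longrightarrow> x ! j = x' ! j" and a: "a \<in> outputs S"
    have "(\<Sum>c<snd (S ! k). \<Sum>i\<in>I. r i (a[k := c]) x) = (\<Sum>i\<in>I. \<Sum>c<snd (S ! k). r i (a[k := c]) x)"
      by (rule sum.swap)
    also have "\<dots> = (\<Sum>i\<in>I. \<Sum>c<snd (S ! k). r i (a[k := c]) x')"
    proof (rule sum.cong[OF refl])
      fix i assume "i \<in> I"
      then have "pseudo S (r i)" by (rule assms)
      then show "(\<Sum>c<snd (S ! k). r i (a[k := c]) x) = (\<Sum>c<snd (S ! k). r i (a[k := c]) x')"
        using k x x' ag a unfolding pseudo_def by blast
    qed
    also have "\<dots> = (\<Sum>c<snd (S ! k). \<Sum>i\<in>I. r i (a[k := c]) x')"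
      by (rule sum.swap)
    finally show "(\<Sum>c<snd (S ! k). \<Sum>i\<in>I. r i (a[k := c]) x) = (\<Sum>c<snd (S ! k). \<Sum>i\<in>I. r i (a[k := c]) x')" .
  qed
  show ?thesis unfolding pseudo_def using A B by (intro conjI)
qed

lemma outf_snoc:
  assumes "length x = length S"
  shows "outf (\<alpha>(length S := \<beta>)) (x @ [y]) = outf \<alpha> x @ [\<beta> y]"
proof -
  have "outf (\<alpha>(length S := \<beta>)) (x @ [y]) = map (\<lambda>i. (\<alpha>(length S := \<beta>)) i ((x@[y])!i)) [0..<length S] @ [\<beta> y]"
    using assms by (simp add: outf_def nth_append)
  also have "map (\<lambda>i. (\<alpha>(length S := \<beta>)) i ((x@[y])!i)) [0..<length S] = outf \<alpha> x"
    unfolding outf_def using assms by (intro map_cong) (auto simp: nth_append)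
  finally show ?thesis .
qed

lemma lemmaA:
  assumes "valid_sys S" "\<forall>\<alpha>. valid_strat S \<alpha> \<longrightarrow> lin_apply S \<Phi> (det_state S \<alpha>) = 0" "pseudo S r"
  shows "lin_apply S \<Phi> r = 0"
  using assms
proof (induction S arbitrary: \<Phi> r rule: rev_induct)
  case Nil
  have "valid_strat [] (\<lambda>_ _. 0)" by (simp add: valid_strat_def)
  then have "lin_apply [] \<Phi> (det_state [] (\<lambda>_ _. 0)) = 0" using Nil by blast
  then have "\<Phi> [] [] = 0" by (simp add: lin_apply_alt det_state_def outf_def)
  then show ?case by (simp add: lin_apply_alt)
next
  case (snoc b S)
  define n where "n = length S"
  have vS: "valid_sys S" and b1: "1 \<le> snd b" "1 \<le> fst b" using snoc.prems(1) by (auto simp: valid_sys_def)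
  define \<Psi> where "\<Psi> c y = (\<lambda>a x. \<Phi> (a@[c]) (x@[y]))" for c y
  define rp where "rp c y = (\<lambda>a x. r (a@[c]) (x@[y]))" for c y
  have F: "(\<Sum>y<fst b. lin_apply S (\<Psi> (\<beta> y) y) r') = 0"
    if \<beta>: "\<forall>y<fst b. \<beta> y < snd b" and r': "pseudo S r'" for \<beta> r'
  proof -
    have "lin_apply S (\<lambda>a x. \<Sum>y<fst b. \<Psi> (\<beta> y) y a x) r' = 0"
    proof (rule snoc.IH[OF vS _ r'], intro allI impI)
      fix \<alpha> assume va: "valid_strat S \<alpha>"
      define \<alpha>' where "\<alpha>' = \<alpha>(n := \<beta>)"
      have v': "valid_strat (S@[b]) \<alpha>'"
        using va \<beta> unfolding valid_strat_def by (simp add: All_less_Suc nth_append \<alpha>'_def n_def)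
      have "lin_apply (S@[b]) \<Phi> (det_state (S@[b]) \<alpha>') = 0" using snoc.prems(2) v' by blast
      moreover have "lin_apply (S@[b]) \<Phi> (det_state (S@[b]) \<alpha>')
          = lin_apply S (\<lambda>a x. \<Sum>y<fst b. \<Psi> (\<beta> y) y a x) (det_state S \<alpha>)"
        unfolding lin_apply_det[OF v'] lin_apply_det[OF va] sum_inputs_snoc
        by (intro sum.cong refl) (simp add: \<alpha>'_def n_def outf_snoc \<Psi>_def inputs_def)
      ultimately show "lin_apply S (\<lambda>a x. \<Sum>y<fst b. \<Psi> (\<beta> y) y a x) (det_state S \<alpha>) = 0" by simp
    qed
    then show ?thesis by (simp add: lin_apply_sum_coef)
  qed
  have swap: "lin_apply S (\<Psi> c y) r' = lin_apply S (\<Psi> 0 y) r'"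
    if c: "c < snd b" and y: "y < fst b" and r': "pseudo S r'" for c y r'
  proof -
    have "(\<Sum>y'<fst b. lin_apply S (\<Psi> (if y' = y then c else 0) y') r') = 0"
    proof -
      have "\<forall>y'<fst b. (\<lambda>y'. if y' = y then c else 0) y' < snd b" using c b1 by simp
      from F[OF this r'] show ?thesis .
    qed
    moreover have "(\<Sum>y'<fst b. lin_apply S (\<Psi> 0 y') r') = 0"
    proof -
      have "\<forall>y'<fst b. (\<lambda>y'. 0::nat) y' < snd b" using b1 by simp
      from F[OF this r'] show ?thesis by simp
    qed
    moreover have "(\<Sum>y'<fst b. lin_apply S (\<Psi> (if y' = y then c else 0) y') r')
       = lin_apply S (\<Psi> c y) r' + (\<Sum>y'\<in>{..<fst b} - {y}. lin_apply S (\<Psi> 0 y') r')"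
    proof -
      have "(\<Sum>y'<fst b. lin_apply S (\<Psi> (if y' = y then c else 0) y') r')
          = lin_apply S (\<Psi> (if y = y then c else 0) y) r' + (\<Sum>y'\<in>{..<fst b} - {y}. lin_apply S (\<Psi> (if y' = y then c else 0) y') r')"
        using y by (intro sum.remove) auto
      also have "(\<Sum>y'\<in>{..<fst b} - {y}. lin_apply S (\<Psi> (if y' = y then c else 0) y') r') = (\<Sum>y'\<in>{..<fst b} - {y}. lin_apply S (\<Psi> 0 y') r')"
        by (rule sum.cong[OF refl]) auto
      finally show ?thesis by simp
    qed
    moreover have "(\<Sum>y'<fst b. lin_apply S (\<Psi> 0 y') r')
       = lin_apply S (\<Psi> 0 y) r' + (\<Sum>y'\<in>{..<fst b} - {y}. lin_apply S (\<Psi> 0 y') r')"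
      using y by (intro sum.remove) auto
    ultimately show ?thesis by linarith
  qed
  have rp_ps: "pseudo S (rp c y)" if c: "c < snd b" and y: "y < fst b" for c y
  proof -
    have r: "pseudo (S@[b]) r" by fact
    show ?thesis unfolding pseudo_def
    proof (intro conjI allI impI ballI)
      fix a x assume "a \<notin> outputs S \<or> x \<notin> inputs S"
      then have "a@[c] \<notin> outputs (S@[b]) \<or> x@[y] \<notin> inputs (S@[b])"
        by (auto simp: outputs_snoc_iff inputs_snoc_iff)
      then show "rp c y a x = 0" unfolding rp_def using pseudo_vanish[OF r] by blast
    next
      fix i x x' a assume i: "i < length S" and x: "x \<in> inputs S" and x': "x' \<in> inputs S"
        and ag: "\<forall>j<length S. j \<noteq> i \<longrightarrow> x ! j = x' ! j" and a: "a \<in> outputs S"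
      have la: "length a = length S" "length x = length S" "length x' = length S"
        using a x x' by (auto simp: outputs_def inputs_def)
      have "x@[y] \<in> inputs (S@[b])" "x'@[y] \<in> inputs (S@[b])" "a@[c] \<in> outputs (S@[b])"
        using x x' a c y by (simp_all add: outputs_snoc_iff inputs_snoc_iff)
      moreover have "\<forall>j<length (S@[b]). j \<noteq> i \<longrightarrow> (x@[y]) ! j = (x'@[y]) ! j"
        using ag la by (simp add: All_less_Suc nth_append)
      moreover have "i < length (S@[b])" using i by simp
      ultimately have "(\<Sum>c'<snd ((S@[b])!i). r ((a@[c])[i:=c']) (x@[y])) = (\<Sum>c'<snd ((S@[b])!i). r ((a@[c])[i:=c']) (x'@[y]))"
        by (intro pseudo_NS[OF r])
      then show "(\<Sum>c'<snd (S ! i). rp c y (a[i := c']) x) = (\<Sum>c'<snd (S ! i). rp c y (a[i := c']) x')"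
        using i la by (simp add: rp_def nth_append list_update_append)
    qed
  qed
  define M where "M = (\<lambda>a x. \<Sum>c<snd b. rp c 0 a x)"
  have Mps: "pseudo S M" unfolding M_def using b1 by (intro pseudo_sum rp_ps) auto
  have Meq: "(\<lambda>a x. \<Sum>c<snd b. rp c y a x) = M" if y: "y < fst b" for y
  proof (intro ext)
    fix a x
    show "(\<Sum>c<snd b. rp c y a x) = M a x"
    proof (cases "a \<in> outputs S \<and> x \<in> inputs S")
      case True
      have r: "pseudo (S@[b]) r" by fact
      have la: "length a = length S" "length x = length S" using True by (auto simp: outputs_def inputs_def)
      have "x@[y] \<in> inputs (S@[b])" "x@[0] \<in> inputs (S@[b])" "a@[0] \<in> outputs (S@[b])"
        using True y b1 by (simp_all add: outputs_snoc_iff inputs_snoc_iff)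
      moreover have "\<forall>j<length (S@[b]). j \<noteq> length S \<longrightarrow> (x@[y]) ! j = (x@[0]) ! j"
        using la by (simp add: All_less_Suc nth_append)
      ultimately have "(\<Sum>c'<snd ((S@[b])!length S). r ((a@[0])[length S:=c']) (x@[y]))
           = (\<Sum>c'<snd ((S@[b])!length S). r ((a@[0])[length S:=c']) (x@[0]))"
        by (intro pseudo_NS[OF r]) auto
      then show ?thesis using la by (simp add: M_def rp_def list_update_append)
    next
      case False
      have z: "rp c y' a x = 0" if "c < snd b" "y' < fst b" for c y'
        using pseudo_vanish[OF rp_ps[OF that]] False by blast
      have "(\<Sum>c<snd b. rp c y a x) = 0" using z y by (intro sum.neutral) auto
      moreover have "M a x = 0" unfolding M_def using z b1 by (intro sum.neutral) auto
      ultimately show ?thesis by simp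
    qed
  qed
  have "lin_apply (S@[b]) \<Phi> r = (\<Sum>c<snd b. \<Sum>y<fst b. lin_apply S (\<Psi> c y) (rp c y))"
    by (simp add: lin_apply_snoc \<Psi>_def rp_def)
  also have "\<dots> = (\<Sum>c<snd b. \<Sum>y<fst b. lin_apply S (\<Psi> 0 y) (rp c y))"
    by (intro sum.cong refl swap rp_ps) auto
  also have "\<dots> = (\<Sum>y<fst b. \<Sum>c<snd b. lin_apply S (\<Psi> 0 y) (rp c y))"
    by (rule sum.swap)
  also have "\<dots> = (\<Sum>y<fst b. lin_apply S (\<Psi> 0 y) (\<lambda>a x. \<Sum>c<snd b. rp c y a x))"
    by (simp only: lin_apply_sum_state)
  also have "\<dots> = (\<Sum>y<fst b. lin_apply S (\<Psi> 0 y) M)"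
  proof (rule sum.cong[OF refl])
    fix y assume "y \<in> {..<fst b}"
    then show "lin_apply S (\<Psi> 0 y) (\<lambda>a x. \<Sum>c<snd b. rp c y a x) = lin_apply S (\<Psi> 0 y) M"
      using Meq[of y] by simp
  qed
  also have "\<dots> = 0"
  proof -
    have "\<forall>y<fst b. (\<lambda>_. 0::nat) y < snd b" using b1 by auto
    from F[OF this Mps] show ?thesis by simp
  qed
  finally show ?case .
qed


definition coord :: "nat list \<Rightarrow> nat list \<Rightarrow> nat list \<Rightarrow> nat list \<Rightarrow> real" where
  "coord a0 x0 = (\<lambda>a x. if a = a0 \<and> x = x0 then 1 else 0)"

lemma lin_apply_coord:
  assumes "a0 \<in> outputs S" "x0 \<in> inputs S"
  shows "lin_apply S (coord a0 x0) p = p a0 x0"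
proof -
  have "lin_apply S (coord a0 x0) p = (\<Sum>a\<in>outputs S. \<Sum>x\<in>inputs S. if a = a0 \<and> x = x0 then p a x else 0)"
    unfolding lin_apply_alt coord_def by (intro sum.cong refl) auto
  also have "\<dots> = (\<Sum>a\<in>outputs S. if a = a0 then p a x0 else 0)"
    using assms by (intro sum.cong refl) (auto simp: sum.delta')
  also have "\<dots> = p a0 x0" using assms by (simp add: sum.delta')
  finally show ?thesis .
qed

definition ones_at :: "nat list \<Rightarrow> nat list \<Rightarrow> nat list \<Rightarrow> real" where
  "ones_at x0 = (\<lambda>a x. if x = x0 then 1 else 0)"

lemma lin_apply_ones_at:
  assumes "x0 \<in> inputs S"
  shows "lin_apply S (ones_at x0) p = (\<Sum>a\<in>outputs S. p a x0)"
proof -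
  have "lin_apply S (ones_at x0) p = (\<Sum>a\<in>outputs S. \<Sum>x\<in>inputs S. if x = x0 then p a x else 0)"
    unfolding lin_apply_alt ones_at_def by (intro sum.cong refl) auto
  also have "\<dots> = (\<Sum>a\<in>outputs S. p a x0)"
    using assms by (intro sum.cong refl) (auto simp: sum.delta')
  finally show ?thesis .
qed

lemma state_vanish: "is_state S p \<Longrightarrow> a \<notin> outputs S \<or> x \<notin> inputs S \<Longrightarrow> p a x = 0"
  unfolding is_state_def by blast
lemma state_nonneg: "is_state S p \<Longrightarrow> 0 \<le> p a x"
  unfolding is_state_def by (cases "a \<in> outputs S \<and> x \<in> inputs S") auto
lemma state_norm: "is_state S p \<Longrightarrow> x \<in> inputs S \<Longrightarrow> (\<Sum>a\<in>outputs S. p a x) = 1"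
  unfolding is_state_def by blast

lemma state_le1: "is_state S p \<Longrightarrow> p a x \<le> 1"
proof (cases "a \<in> outputs S \<and> x \<in> inputs S")
  case True
  assume st: "is_state S p"
  have "p a x \<le> (\<Sum>a\<in>outputs S. p a x)"
    using True st by (intro member_le_sum) (auto simp: state_nonneg)
  then show ?thesis using state_norm[OF st] True by simp
next
  case False
  assume st: "is_state S p"
  then show ?thesis using state_vanish[OF st] False by simp
qed

lemma valid_sys_nth: "valid_sys S \<Longrightarrow> i < length S \<Longrightarrow> 1 \<le> fst (S!i) \<and> 1 \<le> snd (S!i)"
  unfolding valid_sys_def using nth_mem by blast

lemma zero_input: "valid_sys S \<Longrightarrow> replicate (length S) 0 \<in> inputs S"
  unfolding inputs_def using valid_sys_nth by fastforce

lemma one_from_states: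
  assumes "valid_sys S" "is_state S p"
  shows "lin_apply S (ones_at (replicate (length S) 0)) p = 1"
  using assms by (simp add: lin_apply_ones_at zero_input state_norm)

lemma effect_bounds: "is_effect S c \<Longrightarrow> is_state S p \<Longrightarrow> 0 \<le> lin_apply S c p \<and> lin_apply S c p \<le> 1"
  unfolding is_effect_def by blast

lemma meas_effect: "is_measurement S R \<mu> \<Longrightarrow> r \<in> R \<Longrightarrow> is_effect S (\<mu> r)"
  unfolding is_measurement_def by blast

lemma meas_sum: "is_measurement S R \<mu> \<Longrightarrow> is_state S p \<Longrightarrow> (\<Sum>r\<in>R. lin_apply S (\<mu> r) p) = 1"
  unfolding is_measurement_def by blast

lemma meas_finite: "is_measurement S R \<mu> \<Longrightarrow> finite R"
  unfolding is_measurement_def by blast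

lemma refine_le:
  assumes M: "is_measurement S R' \<nu>" and ref: "refines_via S R' \<nu> f R \<mu>" and s: "s \<in> R'" and p: "is_state S p"
  shows "0 \<le> lin_apply S (\<nu> s) p" "lin_apply S (\<nu> s) p \<le> lin_apply S (\<mu> (f s)) p"
proof -
  show nn: "0 \<le> lin_apply S (\<nu> s) p" using effect_bounds[OF meas_effect[OF M s] p] by simp
  have fs: "f s \<in> R" using ref s unfolding refines_via_def by blast
  have eq: "lin_apply S (\<mu> (f s)) p = (\<Sum>s'\<in>{s'\<in>R'. f s' = f s}. lin_apply S (\<nu> s') p)"
    using ref fs p unfolding refines_via_def by blast
  have "lin_apply S (\<nu> s) p \<le> (\<Sum>s'\<in>{s'\<in>R'. f s' = f s}. lin_apply S (\<nu> s') p)"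
    using s meas_finite[OF M] by (intro member_le_sum) (auto intro: effect_bounds[OF meas_effect[OF M] p, THEN conjunct1])
  then show "lin_apply S (\<nu> s) p \<le> lin_apply S (\<mu> (f s)) p" using eq by simp
qed

definition upd :: "(nat \<Rightarrow> nat \<Rightarrow> nat) \<Rightarrow> nat \<Rightarrow> nat \<Rightarrow> nat \<Rightarrow> nat \<Rightarrow> nat \<Rightarrow> nat" where
  "upd \<alpha> i y v = \<alpha>(i := (\<alpha> i)(y := v))"

lemma upd_apply: "upd \<alpha> i y v j z = (if j = i \<and> z = y then v else \<alpha> j z)"
  by (simp add: upd_def)

lemma outf_cong: "(\<And>j. j < length x \<Longrightarrow> \<alpha> j (x!j) = \<beta> j (x!j)) \<Longrightarrow> outf \<alpha> x = outf \<beta> x"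
  by (simp add: outf_def)

lemma valid_upd: "valid_strat S \<alpha> \<Longrightarrow> i < length S \<Longrightarrow> v < snd (S!i) \<Longrightarrow> valid_strat S (upd \<alpha> i y v)"
  by (auto simp: valid_strat_def upd_apply)

definition coef_sum :: "box list \<Rightarrow> (nat list \<Rightarrow> nat list \<Rightarrow> real) \<Rightarrow> (nat \<Rightarrow> nat \<Rightarrow> nat) \<Rightarrow> real" where
  "coef_sum S C \<alpha> = (\<Sum>x\<in>inputs S. C (outf \<alpha> x) x)"

lemma swap_step:
  assumes i: "i < length S" and y: "y \<noteq> x0!i" and x0: "x0 \<in> inputs S"
  shows "coef_sum S C \<alpha> - coef_sum S C (upd \<alpha> i y v)
       = coef_sum S C (upd \<alpha> i (x0!i) w) - coef_sum S C (upd (upd \<alpha> i y v) i (x0!i) w)"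
proof -
  have "C (outf \<alpha> x) x - C (outf (upd \<alpha> i y v) x) x
      = C (outf (upd \<alpha> i (x0!i) w) x) x - C (outf (upd (upd \<alpha> i y v) i (x0!i) w) x) x"
    if x: "x \<in> inputs S" for x
  proof (cases "x!i = y")
    case True
    have "outf \<alpha> x = outf (upd \<alpha> i (x0!i) w) x" using True y by (intro outf_cong) (auto simp: upd_apply)
    moreover have "outf (upd \<alpha> i y v) x = outf (upd (upd \<alpha> i y v) i (x0!i) w) x"
      using True y by (intro outf_cong) (auto simp: upd_apply)
    ultimately show ?thesis by simp
  next
    case False
    have "outf \<alpha> x = outf (upd \<alpha> i y v) x" using False by (intro outf_cong) (auto simp: upd_apply)
    moreover have "outf (upd \<alpha> i (x0!i) w) x = outf (upd (upd \<alpha> i y v) i (x0!i) w) x"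
      using False by (intro outf_cong) (auto simp: upd_apply)
    ultimately show ?thesis by simp
  qed
  then show ?thesis unfolding coef_sum_def by (simp add: sum_subtractf[symmetric] cong: sum.cong)
qed

lemma lin_apply_det_coef: "valid_strat S \<alpha> \<Longrightarrow> lin_apply S C (det_state S \<alpha>) = coef_sum S C \<alpha>"
  by (simp add: lin_apply_det coef_sum_def)

lemma det_at: "a0 \<in> outputs S \<Longrightarrow> x0 \<in> inputs S \<Longrightarrow> det_state S \<alpha> a0 x0 = (if a0 = outf \<alpha> x0 then 1 else 0)"
  by (simp add: det_state_def)

lemma step_eq:
  assumes vS: "valid_sys S" and va: "valid_strat S \<alpha>" and x0: "x0 \<in> inputs S" and a0: "a0 \<in> outputs S"
    and ma: "a0 = outf \<alpha> x0"
    and i: "i < length S" and y: "y \<noteq> x0!i" and v: "v < snd (S!i)"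
    and bounds: "\<forall>\<alpha>. valid_strat S \<alpha> \<longrightarrow> 0 \<le> coef_sum S C \<alpha> \<and> coef_sum S C \<alpha> \<le> (if a0 = outf \<alpha> x0 then 1 else 0)"
  shows "coef_sum S C (upd \<alpha> i y v) = coef_sum S C \<alpha>"
proof (cases "y < fst (S!i)")
  case False
  have "outf (upd \<alpha> i y v) x = outf \<alpha> x" if x: "x \<in> inputs S" for x
  proof (rule outf_cong)
    fix j assume "j < length x"
    then show "upd \<alpha> i y v j (x!j) = \<alpha> j (x!j)" using x False by (auto simp: upd_apply inputs_def)
  qed
  then show ?thesis unfolding coef_sum_def by (intro sum.cong refl) simp
next
  case True
  show ?thesis
  proof (cases "snd (S!i) = 1")
    case True': True
    have "\<alpha> i y < snd (S!i)" using va i \<open>y < fst (S!i)\<close> by (simp add: valid_strat_def)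
    then have "upd \<alpha> i y v = \<alpha>" using v True' by (auto simp: upd_def fun_eq_iff)
    then show ?thesis by simp
  next
    case False
    have sn: "2 \<le> snd (S!i)" using False valid_sys_nth[OF vS i] by linarith
    define w where "w = (if a0!i = 0 then 1 else 0::nat)"
    have w: "w < snd (S!i)" "w \<noteq> a0!i" using sn by (auto simp: w_def)
    have li: "i < length x0" using x0 i by (simp add: inputs_def)
    have nm: "coef_sum S C \<beta> = 0" if vb: "valid_strat S \<beta>" and bw: "\<beta> i (x0!i) = w" for \<beta>
    proof -
      have "a0 \<noteq> outf \<beta> x0"
      proof
        assume "a0 = outf \<beta> x0"
        then have "a0!i = \<beta> i (x0!i)" using li by simp
        then show False using w bw by simp
      qed
      then show ?thesis using bounds vb by force
    qed
    have v1: "valid_strat S (upd \<alpha> i (x0!i) w)" using valid_upd[OF va i w(1)] .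
    have v2: "valid_strat S (upd (upd \<alpha> i y v) i (x0!i) w)" using valid_upd[OF valid_upd[OF va i v] i w(1)] .
    have "coef_sum S C \<alpha> - coef_sum S C (upd \<alpha> i y v)
       = coef_sum S C (upd \<alpha> i (x0!i) w) - coef_sum S C (upd (upd \<alpha> i y v) i (x0!i) w)"
      by (rule swap_step[OF i y x0])
    also have "\<dots> = 0" using nm[OF v1] nm[OF v2] by (simp add: upd_apply)
    finally show ?thesis by simp
  qed
qed

lemma g_const:
  assumes vS: "valid_sys S" and x0: "x0 \<in> inputs S" and a0: "a0 \<in> outputs S"
    and bounds: "\<forall>\<alpha>. valid_strat S \<alpha> \<longrightarrow> 0 \<le> coef_sum S C \<alpha> \<and> coef_sum S C \<alpha> \<le> (if a0 = outf \<alpha> x0 then 1 else 0)"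
  shows "\<exists>t. \<forall>\<alpha>. valid_strat S \<alpha> \<longrightarrow> coef_sum S C \<alpha> = t * (if a0 = outf \<alpha> x0 then 1 else 0)"
proof (cases "\<exists>\<alpha>0. valid_strat S \<alpha>0 \<and> a0 = outf \<alpha>0 x0")
  case False
  then have "\<forall>\<alpha>. valid_strat S \<alpha> \<longrightarrow> coef_sum S C \<alpha> = 0 * (if a0 = outf \<alpha> x0 then 1 else 0)"
    using bounds by force
  then show ?thesis by blast
next
  case True
  then obtain \<alpha>0 where v0: "valid_strat S \<alpha>0" and m0: "a0 = outf \<alpha>0 x0" by blast
  define D where "D \<alpha> = {(i,y). i < length S \<and> y < fst (S!i) \<and> \<alpha> i y \<noteq> \<alpha>0 i y}" for \<alpha>
  have Dfin: "finite (D \<alpha>)" for \<alpha>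
  proof -
    have "D \<alpha> \<subseteq> Sigma {..<length S} (\<lambda>i. {..<fst (S!i)})" by (auto simp: D_def)
    then show ?thesis by (rule finite_subset) auto
  qed
  have main: "\<forall>\<alpha>. valid_strat S \<alpha> \<longrightarrow> a0 = outf \<alpha> x0 \<longrightarrow> card (D \<alpha>) = m \<longrightarrow> coef_sum S C \<alpha> = coef_sum S C \<alpha>0" for m
  proof (induction m)
    case 0
    show ?case
    proof (intro allI impI)
      fix \<alpha> assume va: "valid_strat S \<alpha>" and "a0 = outf \<alpha> x0" and c: "card (D \<alpha>) = 0"
      then have De: "D \<alpha> = {}" using Dfin by simp
      have "outf \<alpha> x = outf \<alpha>0 x" if x: "x \<in> inputs S" for x
      proof (rule outf_cong)
        fix j assume j: "j < length x"
        then have "j < length S" "x!j < fst (S!j)" using x by (auto simp: inputs_def)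
        then show "\<alpha> j (x!j) = \<alpha>0 j (x!j)" using De unfolding D_def by blast
      qed
      then show "coef_sum S C \<alpha> = coef_sum S C \<alpha>0" unfolding coef_sum_def by (intro sum.cong refl) simp
    qed
  next
    case (Suc m)
    show ?case
    proof (intro allI impI)
      fix \<alpha> assume va: "valid_strat S \<alpha>" and ma: "a0 = outf \<alpha> x0" and c: "card (D \<alpha>) = Suc m"
      then obtain i y where iy: "(i,y) \<in> D \<alpha>" by (metis card.empty ex_in_conv nat.distinct(1) prod.exhaust)
      then have i: "i < length S" and yf: "y < fst (S!i)" and ne: "\<alpha> i y \<noteq> \<alpha>0 i y" by (auto simp: D_def)
      have li: "i < length x0" using x0 i by (simp add: inputs_def)
      have y: "y \<noteq> x0!i"
      proof
        assume "y = x0!i"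
        moreover have "\<alpha> i (x0!i) = \<alpha>0 i (x0!i)" using ma m0 li by (metis nth_outf)
        ultimately show False using ne by simp
      qed
      have v: "\<alpha>0 i y < snd (S!i)" using v0 i yf by (simp add: valid_strat_def)
      define \<alpha>2 where "\<alpha>2 = upd \<alpha> i y (\<alpha>0 i y)"
      have va2: "valid_strat S \<alpha>2" unfolding \<alpha>2_def by (rule valid_upd[OF va i v])
      have ma2: "a0 = outf \<alpha>2 x0" unfolding ma \<alpha>2_def using y by (intro outf_cong) (auto simp: upd_apply)
      have "D \<alpha>2 = D \<alpha> - {(i,y)}" by (auto simp: D_def \<alpha>2_def upd_apply)
      then have "card (D \<alpha>2) = m" using c iy Dfin by simp
      then have "coef_sum S C \<alpha>2 = coef_sum S C \<alpha>0" using Suc.IH va2 ma2 by blast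
      moreover have "coef_sum S C \<alpha>2 = coef_sum S C \<alpha>"
        unfolding \<alpha>2_def by (rule step_eq[OF vS va x0 a0 ma i y v bounds])
      ultimately show "coef_sum S C \<alpha> = coef_sum S C \<alpha>0" by simp
    qed
  qed
  have "\<forall>\<alpha>. valid_strat S \<alpha> \<longrightarrow> coef_sum S C \<alpha> = coef_sum S C \<alpha>0 * (if a0 = outf \<alpha> x0 then 1 else 0)"
  proof (intro allI impI)
    fix \<alpha> assume va: "valid_strat S \<alpha>"
    show "coef_sum S C \<alpha> = coef_sum S C \<alpha>0 * (if a0 = outf \<alpha> x0 then 1 else 0)"
    proof (cases "a0 = outf \<alpha> x0")
      case True then show ?thesis using main va by simp
    next
      case False then show ?thesis using bounds va by force
    qed
  qed
  then show ?thesis by blast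
qed

definition coordM :: "nat \<Rightarrow> nat list \<Rightarrow> nat list \<Rightarrow> real" where
  "coordM r = coord (fst (from_nat r :: nat list \<times> nat list)) (snd (from_nat r :: nat list \<times> nat list))"

lemma coordM_to_nat: "coordM (to_nat k) = coord (fst k) (snd k)"
  by (simp add: coordM_def)

theorem coord_meas_maxinf:
  assumes vS: "valid_sys S" and Kfin: "finite K" and Ksub: "K \<subseteq> outputs S \<times> inputs S"
    and wire: "\<forall>\<alpha>. valid_strat S \<alpha> \<longrightarrow> card {k\<in>K. fst k = outf \<alpha> (snd k)} = 1"
  shows "maximally_informative S (to_nat ` K) coordM"
proof -
  have injK: "inj_on to_nat K" by (meson inj_on_subset inj_to_nat subset_UNIV)
  have val: "lin_apply S (coordM (to_nat k)) p = p (fst k) (snd k)" if "k \<in> K" for k p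
    using that Ksub by (auto simp: coordM_to_nat intro!: lin_apply_coord)
  define z where "z = replicate (length S) (0::nat)"
  have z: "z \<in> inputs S" unfolding z_def by (rule zero_input[OF vS])
  define \<Phi> where "\<Phi> = (\<lambda>a x. (\<Sum>k\<in>K. coord (fst k) (snd k) a x) - ones_at z a x)"
  have sum1: "(\<Sum>k\<in>K. p (fst k) (snd k)) = 1" if st: "is_state S p" for p
  proof -
    have "lin_apply S \<Phi> p = 0"
    proof (rule lemmaA[OF vS _ state_pseudo[OF st]], intro allI impI)
      fix \<alpha> assume va: "valid_strat S \<alpha>"
      have "lin_apply S \<Phi> (det_state S \<alpha>) = (\<Sum>k\<in>K. det_state S \<alpha> (fst k) (snd k)) - (\<Sum>a\<in>outputs S. det_state S \<alpha> a z)"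
        unfolding \<Phi>_def lin_apply_diff_coef lin_apply_sum_coef lin_apply_ones_at[OF z]
        using Ksub by (intro arg_cong2[where f="(-)"] sum.cong refl lin_apply_coord) auto
      also have "(\<Sum>a\<in>outputs S. det_state S \<alpha> a z) = 1" by (rule det_state_norm[OF va z])
      also have "(\<Sum>k\<in>K. det_state S \<alpha> (fst k) (snd k)) = (\<Sum>k\<in>K. if fst k = outf \<alpha> (snd k) then 1 else 0)"
        using Ksub by (intro sum.cong refl) (auto simp: det_at)
      also have "\<dots> = real (card {k\<in>K. fst k = outf \<alpha> (snd k)})"
        using Kfin by (simp add: sum.inter_filter[symmetric])
      also have "\<dots> = 1" using wire va by simp
      finally show "lin_apply S \<Phi> (det_state S \<alpha>) = 0" by simp
    qed
    moreover have "lin_apply S \<Phi> p = (\<Sum>k\<in>K. p (fst k) (snd k)) - 1"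
      unfolding \<Phi>_def lin_apply_diff_coef lin_apply_sum_coef lin_apply_ones_at[OF z] state_norm[OF st z]
      using Ksub by (intro arg_cong2[where f="(-)"] sum.cong refl lin_apply_coord) auto
    ultimately show ?thesis by simp
  qed
  have meas: "is_measurement S (to_nat ` K) coordM"
    unfolding is_measurement_def
  proof (intro conjI allI impI ballI)
    show "finite (to_nat ` K)" using Kfin by simp
  next
    fix r assume "r \<in> to_nat ` K"
    then obtain k where k: "k \<in> K" and r: "r = to_nat k" by blast
    show "is_effect S (coordM r)" unfolding is_effect_def r
      using val[OF k] by (simp add: state_nonneg state_le1)
  next
    fix p assume st: "is_state S p"
    have "(\<Sum>r\<in>to_nat ` K. lin_apply S (coordM r) p) = (\<Sum>k\<in>K. lin_apply S (coordM (to_nat k)) p)"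
      by (rule sum.reindex[OF injK, unfolded comp_def])
    also have "\<dots> = (\<Sum>k\<in>K. p (fst k) (snd k))" by (intro sum.cong refl val)
    finally show "(\<Sum>r\<in>to_nat ` K. lin_apply S (coordM r) p) = 1" using sum1[OF st] by simp
  qed
  show ?thesis unfolding maximally_informative_def
  proof (intro conjI meas allI impI)
    fix R' \<nu> f assume H: "is_measurement S R' \<nu> \<and> refines_via S R' \<nu> f (to_nat ` K) coordM"
    then have M: "is_measurement S R' \<nu>" and ref: "refines_via S R' \<nu> f (to_nat ` K) coordM" by auto
    show "trivial_refinement S R' \<nu> f coordM" unfolding trivial_refinement_def
    proof
      fix s assume s: "s \<in> R'"
      have "f s \<in> to_nat ` K" using ref s unfolding refines_via_def by blast
      then obtain k where k: "k \<in> K" and fs: "f s = to_nat k" by blast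
      obtain a0 x0 where kk: "k = (a0, x0)" by (cases k)
      have a0: "a0 \<in> outputs S" and x0: "x0 \<in> inputs S" using k Ksub kk by auto
      have bounds: "\<forall>\<alpha>. valid_strat S \<alpha> \<longrightarrow> 0 \<le> coef_sum S (\<nu> s) \<alpha> \<and> coef_sum S (\<nu> s) \<alpha> \<le> (if a0 = outf \<alpha> x0 then 1 else 0)"
      proof (intro allI impI conjI)
        fix \<alpha> assume va: "valid_strat S \<alpha>"
        note ds = det_state_is_state[OF va]
        show "0 \<le> coef_sum S (\<nu> s) \<alpha>" using refine_le(1)[OF M ref s ds] by (simp add: lin_apply_det_coef[OF va])
        have "coef_sum S (\<nu> s) \<alpha> \<le> lin_apply S (coordM (f s)) (det_state S \<alpha>)"
          using refine_le(2)[OF M ref s ds] by (simp add: lin_apply_det_coef[OF va])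
        also have "\<dots> = det_state S \<alpha> a0 x0" unfolding fs using val[OF k] kk by simp
        finally show "coef_sum S (\<nu> s) \<alpha> \<le> (if a0 = outf \<alpha> x0 then 1 else 0)" by (simp add: det_at[OF a0 x0])
      qed
      obtain t where t: "\<forall>\<alpha>. valid_strat S \<alpha> \<longrightarrow> coef_sum S (\<nu> s) \<alpha> = t * (if a0 = outf \<alpha> x0 then 1 else 0)"
        using g_const[OF vS x0 a0 bounds] by blast
      have "lin_apply S (\<nu> s) p = t * lin_apply S (coordM (f s)) p" if st: "is_state S p" for p
      proof -
        have "lin_apply S (\<lambda>a x. \<nu> s a x - t * coord a0 x0 a x) p = 0"
        proof (rule lemmaA[OF vS _ state_pseudo[OF st]], intro allI impI)
          fix \<alpha> assume va: "valid_strat S \<alpha>"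
          show "lin_apply S (\<lambda>a x. \<nu> s a x - t * coord a0 x0 a x) (det_state S \<alpha>) = 0"
            unfolding lin_apply_diff_coef lin_apply_scale_coef lin_apply_coord[OF a0 x0]
            using t va by (simp add: lin_apply_det_coef det_at[OF a0 x0])
        qed
        then show ?thesis unfolding lin_apply_diff_coef lin_apply_scale_coef fs
          using val[OF k] kk lin_apply_coord[OF a0 x0] by simp
      qed
      then show "\<exists>t. \<forall>p. is_state S p \<longrightarrow> lin_apply S (\<nu> s) p = t * lin_apply S (coordM (f s)) p"
        by blast
    qed
  qed
qed


lemma outputs_Cons_iff: "c # a \<in> outputs (b # S) \<longleftrightarrow> c < snd b \<and> a \<in> outputs S"
  by (auto simp: outputs_def All_less_Suc2)

lemma inputs_Cons_iff: "c # a \<in> inputs (b # S) \<longleftrightarrow> c < fst b \<and> a \<in> inputs S"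
  by (auto simp: inputs_def All_less_Suc2)

lemma outputs_Cons: "outputs (b # S) = (\<lambda>(c,a). c # a) ` ({..<snd b} \<times> outputs S)"
proof (intro set_eqI iffI)
  fix a assume a: "a \<in> outputs (b # S)"
  then have "a \<noteq> []" by (auto simp: outputs_def)
  then obtain c a' where "a = c # a'" by (cases a) auto
  with a show "a \<in> (\<lambda>(c,a). c # a) ` ({..<snd b} \<times> outputs S)" by (auto simp: outputs_Cons_iff)
qed (auto simp: outputs_Cons_iff)

lemma inputs_Cons: "inputs (b # S) = (\<lambda>(c,a). c # a) ` ({..<fst b} \<times> inputs S)"
proof (intro set_eqI iffI)
  fix a assume a: "a \<in> inputs (b # S)"
  then have "a \<noteq> []" by (auto simp: inputs_def)
  then obtain c a' where "a = c # a'" by (cases a) auto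
  with a show "a \<in> (\<lambda>(c,a). c # a) ` ({..<fst b} \<times> inputs S)" by (auto simp: inputs_Cons_iff)
qed (auto simp: inputs_Cons_iff)

lemma inj_Cons2: "inj_on (\<lambda>(c,a). c # a) A" by (auto simp: inj_on_def)

lemma sum_outputs_Cons:
  "(\<Sum>a\<in>outputs (b # S). F a) = (\<Sum>c<snd b. \<Sum>a\<in>outputs S. F (c # a))"
  unfolding outputs_Cons by (subst sum.reindex[OF inj_Cons2]) (simp add: sum.cartesian_product case_prod_unfold)

lemma sum_inputs_Cons:
  "(\<Sum>a\<in>inputs (b # S). F a) = (\<Sum>c<fst b. \<Sum>a\<in>inputs S. F (c # a))"
  unfolding inputs_Cons by (subst sum.reindex[OF inj_Cons2]) (simp add: sum.cartesian_product case_prod_unfold)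

lemma sum_outputs_Nil: "(\<Sum>a\<in>outputs []. F a) = F []" by simp
lemma sum_inputs_Nil: "(\<Sum>a\<in>inputs []. F a) = F []" by simp

lemma outputs_Nil_iff: "a \<in> outputs [] \<longleftrightarrow> a = []" by simp
lemma inputs_Nil_iff: "a \<in> inputs [] \<longleftrightarrow> a = []" by simp

lemma outf_Cons2: "outf \<alpha> [x0, x1] = [\<alpha> 0 x0, \<alpha> 1 x1]"
  by (simp add: outf_def)

lemma outf_Cons4: "outf \<alpha> [x0, x1, x2, x3] = [\<alpha> 0 x0, \<alpha> 1 x1, \<alpha> 2 x2, \<alpha> 3 x3]"
  by (simp add: outf_def numeral_eq_Suc upt_rec)

section \<open>Entropy basics\<close>

lemma ent_term_nonneg: "0 \<le> q \<Longrightarrow> q \<le> 1 \<Longrightarrow> 0 \<le> ent_term q"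
  by (auto simp: ent_term_def mult_nonneg_nonpos log_le_zero_cancel_iff)

lemma ent_term_zero[simp]: "ent_term 0 = 0" by (simp add: ent_term_def)

lemma ent_term_mult:
  assumes "0 \<le> P" "0 \<le> s"
  shows "ent_term (P * s) = s * ent_term P + P * ent_term s"
proof (cases "P = 0 \<or> s = 0")
  case True then show ?thesis using assms by (auto simp: ent_term_def)
next
  case False
  then have P: "P > 0" and s: "s > 0" using assms by auto
  then have ps: "\<not> P * s \<le> 0" "\<not> P \<le> 0" "\<not> s \<le> 0" by (auto simp: not_le)
  show ?thesis unfolding ent_term_def using ps P s by (simp add: log_mult algebra_simps)
qed

lemma ent_term_ge_log: 
  assumes "0 \<le> x" "x \<le> y"
  shows "x * (- log 2 y) \<le> ent_term x"
proof (cases "x = 0")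
  case True then show ?thesis by simp
next
  case False
  then have x: "x > 0" using assms by auto
  then have "log 2 x \<le> log 2 y" using assms by simp
  then show ?thesis using x by (simp add: ent_term_def mult_left_mono)
qed

lemma ent_sum_ge:
  assumes "finite G" "\<And>r. r \<in> G \<Longrightarrow> 0 \<le> x r"
  shows "ent_term (\<Sum>r\<in>G. x r) \<le> (\<Sum>r\<in>G. ent_term (x r))"
proof (cases "(\<Sum>r\<in>G. x r) = 0")
  case True
  then have "\<forall>r\<in>G. x r = 0" using assms sum_nonneg_eq_0_iff by blast
  then show ?thesis using True by simp
next
  case False
  define X where "X = (\<Sum>r\<in>G. x r)"
  have X: "X > 0" using False assms by (simp add: X_def sum_nonneg order_less_le)
  have le: "x r \<le> X" if "r \<in> G" for r
    unfolding X_def using assms that by (intro member_le_sum) auto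
  have "ent_term X = (\<Sum>r\<in>G. x r) * (- log 2 X)" using X by (simp add: ent_term_def X_def)
  also have "\<dots> = (\<Sum>r\<in>G. x r * (- log 2 X))" by (rule sum_distrib_right)
  also have "\<dots> \<le> (\<Sum>r\<in>G. ent_term (x r))"
    using assms le by (intro sum_mono ent_term_ge_log) auto
  finally show ?thesis by (simp add: X_def)
qed

lemma ent_scale_ge:
  assumes "0 \<le> w" "w \<le> 1" "0 \<le> q"
  shows "w * ent_term q \<le> ent_term (w * q)"
proof (cases "w = 0 \<or> q = 0")
  case True then show ?thesis using assms by (auto simp: ent_term_def)
next
  case False
  then have w: "w > 0" and q: "q > 0" using assms by auto
  have "log 2 w \<le> 0" using w assms by simp
  then have "0 \<le> w * q * (- log 2 w)" using w q by (intro mult_nonneg_nonneg) auto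
  moreover have "\<not> w * q \<le> 0" "\<not> q \<le> 0" using w q by (auto simp: not_le)
  ultimately show ?thesis using w q unfolding ent_term_def by (simp add: log_mult algebra_simps)
qed


locale twobox =
  fixes m n K :: nat
  assumes m1: "1 \<le> m" and n1: "1 \<le> n" and K1: "1 \<le> K"
begin

abbreviation "S2 \<equiv> [(m,n),(Suc 0,K)]"

lemma vS2: "valid_sys S2" using m1 n1 K1 by (simp add: valid_sys_def)

lemma out2: "a \<in> outputs S2 \<longleftrightarrow> (\<exists>a0 c. a = [a0,c] \<and> a0 < n \<and> c < K)"
proof
  assume "a \<in> outputs S2"
  then have "length a = 2" by (simp add: outputs_def)
  then obtain a0 c where "a = [a0,c]" by (metis (no_types) One_nat_def length_0_conv length_Suc_conv numeral_2_eq_2)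
  with \<open>a \<in> outputs S2\<close> show "\<exists>a0 c. a = [a0,c] \<and> a0 < n \<and> c < K" by (simp add: outputs_Cons_iff)
qed (auto simp: outputs_Cons_iff)

lemma in2: "x \<in> inputs S2 \<longleftrightarrow> (\<exists>x0. x = [x0,0] \<and> x0 < m)"
proof
  assume "x \<in> inputs S2"
  then have "length x = 2" by (simp add: inputs_def)
  then obtain x0 c where "x = [x0,c]" by (metis (no_types) One_nat_def length_0_conv length_Suc_conv numeral_2_eq_2)
  with \<open>x \<in> inputs S2\<close> show "\<exists>x0. x = [x0,0] \<and> x0 < m" by (simp add: inputs_Cons_iff)
qed (auto simp: inputs_Cons_iff)

lemma lin2: "lin_apply S2 C q = (\<Sum>a<n. \<Sum>c<K. \<Sum>x<m. C [a,c] [x,0] * q [a,c] [x,0])"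
  by (simp add: lin_apply_alt sum_outputs_Cons sum_inputs_Cons)

lemma coef2: "coef_sum S2 C \<alpha> = (\<Sum>x<m. C [\<alpha> 0 x, \<alpha> (Suc 0) 0] [x,0])"
  by (simp add: coef_sum_def sum_inputs_Cons outf_Cons2)

lemma valid2: "valid_strat S2 \<alpha> \<longleftrightarrow> (\<forall>x<m. \<alpha> 0 x < n) \<and> \<alpha> (Suc 0) 0 < K"
  by (auto simp: valid_strat_def All_less_Suc2 numeral_2_eq_2)

lemma det2: "a < n \<Longrightarrow> c < K \<Longrightarrow> x < m \<Longrightarrow> det_state S2 \<alpha> [a,c] [x,0] = (if a = \<alpha> 0 x \<and> c = \<alpha> (Suc 0) 0 then 1 else 0)"
  by (simp add: det_state_def outputs_Cons_iff inputs_Cons_iff outf_Cons2)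

definition mn :: "(nat list \<Rightarrow> nat list \<Rightarrow> real) \<Rightarrow> nat \<Rightarrow> nat \<Rightarrow> real" where
  "mn C c x = Min ((\<lambda>a. C [a,c] [x,0]) ` {..<n})"
definition TT :: "(nat list \<Rightarrow> nat list \<Rightarrow> real) \<Rightarrow> nat \<Rightarrow> real" where
  "TT C c = (\<Sum>x<m. mn C c x)"
definition wt :: "(nat list \<Rightarrow> nat list \<Rightarrow> real) \<Rightarrow> nat \<Rightarrow> nat \<Rightarrow> nat \<Rightarrow> real" where
  "wt C c x a = C [a,c] [x,0] - mn C c x + (if x = 0 then TT C c else 0)"

lemma mn_le: "a < n \<Longrightarrow> mn C c x \<le> C [a,c] [x,0]"
  unfolding mn_def by (rule Min_le) auto

lemma mn_ex: "\<exists>a<n. C [a,c] [x,0] = mn C c x"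
proof -
  have ne: "{..<n} \<noteq> {}" using n1 by (simp add: lessThan_empty_iff)
  have "mn C c x \<in> (\<lambda>a. C [a,c] [x,0]) ` {..<n}" unfolding mn_def using ne by (intro Min_in) auto
  then show ?thesis by auto
qed

lemma TT_nonneg:
  assumes eff: "is_effect S2 C" and c: "c < K"
  shows "0 \<le> TT C c"
proof -
  obtain f where f: "\<forall>x. f x < n \<and> C [f x,c] [x,0] = mn C c x"
    using mn_ex[of C c] by metis
  define \<alpha> :: "nat \<Rightarrow> nat \<Rightarrow> nat" where "\<alpha> = (\<lambda>i y. if i = 0 then f y else c)"
  have "(\<forall>x<m. \<alpha> 0 x < n) \<and> \<alpha> (Suc 0) 0 < K" using f c by (simp add: \<alpha>_def)
  then have va: "valid_strat S2 \<alpha>" using valid2 by blast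
  have "coef_sum S2 C \<alpha> = TT C c" by (simp add: coef2 \<alpha>_def f TT_def)
  moreover have "0 \<le> lin_apply S2 C (det_state S2 \<alpha>)"
    using effect_bounds[OF eff det_state_is_state[OF va]] by simp
  ultimately show ?thesis by (simp add: lin_apply_det_coef[OF va])
qed

lemma wt_nonneg: "is_effect S2 C \<Longrightarrow> c < K \<Longrightarrow> a < n \<Longrightarrow> 0 \<le> wt C c x a"
  using mn_le[of a C c x] TT_nonneg[of C c] by (simp add: wt_def)

lemma decomp:
  assumes st: "is_state S2 q"
  shows "lin_apply S2 C q = (\<Sum>c<K. \<Sum>x<m. \<Sum>a<n. wt C c x a * q [a,c] [x,0])"
proof -
  define \<Phi> where "\<Phi> = (\<lambda>a' x'. C a' x' - (\<Sum>c<K. \<Sum>x<m. \<Sum>a<n. wt C c x a * coord [a,c] [x,0] a' x'))"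
  have cl: "lin_apply S2 (\<lambda>a' x'. \<Sum>c<K. \<Sum>x<m. \<Sum>a<n. wt C c x a * coord [a,c] [x,0] a' x') r
        = (\<Sum>c<K. \<Sum>x<m. \<Sum>a<n. wt C c x a * r [a,c] [x,0])" for r
    by (simp add: lin_apply_sum_coef lin_apply_scale_coef lin_apply_coord outputs_Cons_iff inputs_Cons_iff)
  have "lin_apply S2 \<Phi> q = 0"
  proof (rule lemmaA[OF vS2 _ state_pseudo[OF st]], intro allI impI)
    fix \<alpha> assume va: "valid_strat S2 \<alpha>"
    have a0: "\<forall>x<m. \<alpha> 0 x < n" and a1: "\<alpha> (Suc 0) 0 < K" using va valid2 by blast+
    have "(\<Sum>c<K. \<Sum>x<m. \<Sum>a<n. wt C c x a * det_state S2 \<alpha> [a,c] [x,0])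
        = (\<Sum>c<K. \<Sum>x<m. if c = \<alpha> (Suc 0) 0 then wt C c x (\<alpha> 0 x) else 0)"
    proof (intro sum.cong refl)
      fix c x assume c: "c \<in> {..<K}" and x: "x \<in> {..<m}"
      have "(\<Sum>a<n. wt C c x a * det_state S2 \<alpha> [a,c] [x,0]) = (\<Sum>a<n. if a = \<alpha> 0 x then (if c = \<alpha> (Suc 0) 0 then wt C c x a else 0) else 0)"
        using c x by (intro sum.cong refl) (auto simp: det2)
      also have "\<dots> = (if c = \<alpha> (Suc 0) 0 then wt C c x (\<alpha> 0 x) else 0)" using a0 x by (simp add: sum.delta')
      finally show "(\<Sum>a<n. wt C c x a * det_state S2 \<alpha> [a,c] [x,0]) = (if c = \<alpha> (Suc 0) 0 then wt C c x (\<alpha> 0 x) else 0)" .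
    qed
    also have "\<dots> = (\<Sum>c<K. if c = \<alpha> (Suc 0) 0 then (\<Sum>x<m. wt C c x (\<alpha> 0 x)) else 0)"
      by (intro sum.cong refl) auto
    also have "\<dots> = (\<Sum>x<m. wt C (\<alpha> (Suc 0) 0) x (\<alpha> 0 x))" using a1 by (simp add: sum.delta')
    also have "\<dots> = (\<Sum>x<m. C [\<alpha> 0 x, \<alpha> (Suc 0) 0] [x,0] - mn C (\<alpha> (Suc 0) 0) x) + (\<Sum>x<m. if x = 0 then TT C (\<alpha> (Suc 0) 0) else 0)"
      by (simp add: wt_def sum.distrib)
    also have "(\<Sum>x<m. if x = 0 then TT C (\<alpha> (Suc 0) 0) else 0) = TT C (\<alpha> (Suc 0) 0)" using m1 by (simp add: sum.delta)
    also have "(\<Sum>x<m. C [\<alpha> 0 x, \<alpha> (Suc 0) 0] [x,0] - mn C (\<alpha> (Suc 0) 0) x) + TT C (\<alpha> (Suc 0) 0) = coef_sum S2 C \<alpha>"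
      by (simp add: coef2 TT_def sum_subtractf)
    finally have "(\<Sum>c<K. \<Sum>x<m. \<Sum>a<n. wt C c x a * det_state S2 \<alpha> [a,c] [x,0]) = coef_sum S2 C \<alpha>" .
    then show "lin_apply S2 \<Phi> (det_state S2 \<alpha>) = 0"
      unfolding \<Phi>_def lin_apply_diff_coef cl by (simp add: lin_apply_det_coef[OF va])
  qed
  then show ?thesis unfolding \<Phi>_def lin_apply_diff_coef cl by simp
qed

definition T3 :: "(nat \<times> nat \<times> nat) set" where "T3 = {..<K} \<times> {..<m} \<times> {..<n}"
definition ev :: "(nat list \<Rightarrow> nat list \<Rightarrow> real) \<Rightarrow> nat \<times> nat \<times> nat \<Rightarrow> real" where
  "ev q k = q [snd (snd k), fst k] [fst (snd k), 0]"
definition wk :: "(nat list \<Rightarrow> nat list \<Rightarrow> real) \<Rightarrow> nat \<times> nat \<times> nat \<Rightarrow> real" where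
  "wk C k = wt C (fst k) (fst (snd k)) (snd (snd k))"

lemma T3_fin[simp]: "finite T3" by (simp add: T3_def)

lemma T3_mem: "k \<in> T3 \<longleftrightarrow> fst k < K \<and> fst (snd k) < m \<and> snd (snd k) < n"
  by (cases k) (auto simp: T3_def)

lemma sum_T3: "(\<Sum>k\<in>T3. g k) = (\<Sum>c<K. \<Sum>x<m. \<Sum>a<n. g (c,x,a))"
  by (simp add: T3_def sum.cartesian_product)

lemma decomp3: "is_state S2 q \<Longrightarrow> lin_apply S2 C q = (\<Sum>k\<in>T3. wk C k * ev q k)"
  by (simp add: decomp sum_T3 wk_def ev_def)

definition piece :: "(nat list \<Rightarrow> nat list \<Rightarrow> real) \<Rightarrow> nat \<times> nat \<times> nat \<Rightarrow> nat list \<Rightarrow> nat list \<Rightarrow> real" where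
  "piece C k = (\<lambda>a' x'. wk C k * coord [snd (snd k), fst k] [fst (snd k), 0] a' x')"

lemma lin_piece: "k \<in> T3 \<Longrightarrow> lin_apply S2 (piece C k) q = wk C k * ev q k"
  unfolding piece_def lin_apply_scale_coef ev_def
  by (subst lin_apply_coord) (auto simp: T3_mem outputs_Cons_iff inputs_Cons_iff)

lemma wk_nonneg: "is_effect S2 C \<Longrightarrow> k \<in> T3 \<Longrightarrow> 0 \<le> wk C k"
  unfolding wk_def by (rule wt_nonneg) (auto simp: T3_mem)

lemma ev_nonneg: "is_state S2 q \<Longrightarrow> 0 \<le> ev q k"
  unfolding ev_def by (rule state_nonneg)

lemma refine_trivial:
  assumes MI: "maximally_informative S2 R \<mu>" and r: "r \<in> R" and k: "k \<in> T3"
  shows "\<exists>t. \<forall>q. is_state S2 q \<longrightarrow> wk (\<mu> r) k * ev q k = t * lin_apply S2 (\<mu> r) q"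
proof -
  have meas: "is_measurement S2 R \<mu>" using MI by (simp add: maximally_informative_def)
  have Rfin: "finite R" using meas_finite[OF meas] .
  define R' where "R' = to_nat ` (R \<times> T3)"
  define \<nu> where "\<nu> s = piece (\<mu> (fst (from_nat s :: nat \<times> nat \<times> nat \<times> nat))) (snd (from_nat s :: nat \<times> nat \<times> nat \<times> nat))" for s
  define f where "f s = fst (from_nat s :: nat \<times> nat \<times> nat \<times> nat)" for s
  have inj: "inj_on to_nat (R \<times> T3)" by (meson inj_on_subset inj_to_nat subset_UNIV)
  have \<nu>val: "lin_apply S2 (\<nu> (to_nat (r',k'))) q = wk (\<mu> r') k' * ev q k'" if "k' \<in> T3" for r' k' q
    using that by (simp add: \<nu>_def lin_piece)
  have eff: "is_effect S2 (\<mu> r')" if "r' \<in> R" for r' using meas_effect[OF meas that] .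
  have le: "wk (\<mu> r') k' * ev q k' \<le> lin_apply S2 (\<mu> r') q" if "r' \<in> R" "k' \<in> T3" "is_state S2 q" for r' k' q
    unfolding decomp3[OF that(3)] using that
    by (intro member_le_sum) (auto intro!: mult_nonneg_nonneg wk_nonneg eff ev_nonneg)
  have M': "is_measurement S2 R' \<nu>"
    unfolding is_measurement_def
  proof (intro conjI ballI allI impI)
    show "finite R'" unfolding R'_def using Rfin by simp
  next
    fix s assume "s \<in> R'"
    then obtain r' k' where rk: "r' \<in> R" "k' \<in> T3" and s: "s = to_nat (r',k')" unfolding R'_def by blast
    show "is_effect S2 (\<nu> s)" unfolding is_effect_def s \<nu>val[OF rk(2)]
    proof (intro allI impI conjI)
      fix q assume st: "is_state S2 q"
      show "0 \<le> wk (\<mu> r') k' * ev q k'" using wk_nonneg[OF eff[OF rk(1)] rk(2)] ev_nonneg[OF st] by simp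
      show "wk (\<mu> r') k' * ev q k' \<le> 1" using le[OF rk st] effect_bounds[OF eff[OF rk(1)] st] by simp
    qed
  next
    fix q assume st: "is_state S2 q"
    have "(\<Sum>s\<in>R'. lin_apply S2 (\<nu> s) q) = (\<Sum>rk\<in>R \<times> T3. lin_apply S2 (\<nu> (to_nat rk)) q)"
      unfolding R'_def by (rule sum.reindex[OF inj, unfolded comp_def])
    also have "\<dots> = (\<Sum>r'\<in>R. \<Sum>k'\<in>T3. lin_apply S2 (\<nu> (to_nat (r',k'))) q)"
      by (simp add: sum.cartesian_product split_def)
    also have "\<dots> = (\<Sum>r'\<in>R. \<Sum>k'\<in>T3. wk (\<mu> r') k' * ev q k')"
      by (intro sum.cong refl \<nu>val) 
    also have "\<dots> = (\<Sum>r'\<in>R. lin_apply S2 (\<mu> r') q)" by (simp add: decomp3[OF st])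
    also have "\<dots> = 1" using meas_sum[OF meas st] .
    finally show "(\<Sum>s\<in>R'. lin_apply S2 (\<nu> s) q) = 1" .
  qed
  have ref: "refines_via S2 R' \<nu> f R \<mu>"
    unfolding refines_via_def
  proof (intro conjI ballI allI impI)
    fix s assume "s \<in> R'"
    then show "f s \<in> R" unfolding R'_def f_def by auto
  next
    fix r' q assume r': "r' \<in> R" and st: "is_state S2 q"
    have set: "{s \<in> R'. f s = r'} = to_nat ` ({r'} \<times> T3)"
      unfolding R'_def f_def using r' by auto
    have inj2: "inj_on to_nat ({r'} \<times> T3)" by (meson inj_on_subset inj_to_nat subset_UNIV)
    have "(\<Sum>s\<in>{s \<in> R'. f s = r'}. lin_apply S2 (\<nu> s) q) = (\<Sum>rk\<in>{r'} \<times> T3. lin_apply S2 (\<nu> (to_nat rk)) q)"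
      unfolding set by (rule sum.reindex[OF inj2, unfolded comp_def])
    also have "\<dots> = (\<Sum>r''\<in>{r'}. \<Sum>k'\<in>T3. lin_apply S2 (\<nu> (to_nat (r'',k'))) q)"
      by (simp only: sum.cartesian_product split_def prod.collapse)
    also have "\<dots> = (\<Sum>k'\<in>T3. lin_apply S2 (\<nu> (to_nat (r',k'))) q)"
      by simp
    also have "\<dots> = (\<Sum>k'\<in>T3. wk (\<mu> r') k' * ev q k')"
      by (intro sum.cong refl \<nu>val)
    finally show "lin_apply S2 (\<mu> r') q = (\<Sum>s\<in>{s \<in> R'. f s = r'}. lin_apply S2 (\<nu> s) q)"
      by (simp add: decomp3[OF st])
  qed
  have "trivial_refinement S2 R' \<nu> f \<mu>" using MI M' ref unfolding maximally_informative_def by blast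
  moreover have "to_nat (r,k) \<in> R'" using r k by (simp add: R'_def)
  ultimately obtain t where t: "\<forall>q. is_state S2 q \<longrightarrow> lin_apply S2 (\<nu> (to_nat (r,k))) q = t * lin_apply S2 (\<mu> (f (to_nat (r,k)))) q"
    unfolding trivial_refinement_def by blast
  then show ?thesis using \<nu>val[OF k] by (auto simp: f_def)
qed

end


context twobox begin

definition detk :: "nat \<times> nat \<times> nat \<Rightarrow> nat \<Rightarrow> nat \<Rightarrow> nat" where
  "detk k = (\<lambda>i y. if i = 0 then snd (snd k) else fst k)"

lemma detk_valid: "k \<in> T3 \<Longrightarrow> valid_strat S2 (detk k)"
  using valid2 by (auto simp: detk_def T3_mem)

lemma ev_det: "k \<in> T3 \<Longrightarrow> k' \<in> T3 \<Longrightarrow> valid_strat S2 \<alpha> \<Longrightarrow>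
   ev (det_state S2 \<alpha>) k' = (if snd (snd k') = \<alpha> 0 (fst (snd k')) \<and> fst k' = \<alpha> (Suc 0) 0 then 1 else 0)"
  by (simp add: ev_def det2 T3_mem)

lemma ev_detk: "k \<in> T3 \<Longrightarrow> ev (det_state S2 (detk k)) k = 1"
  by (simp add: ev_def det2 T3_mem detk_def)

lemma single_coord:
  assumes MI: "maximally_informative S2 R \<mu>" and r: "r \<in> R"
  shows "\<exists>lam k. 0 \<le> lam \<and> k \<in> T3 \<and> (\<forall>q. is_state S2 q \<longrightarrow> lin_apply S2 (\<mu> r) q = lam * ev q k)"
proof -
  have meas: "is_measurement S2 R \<mu>" using MI by (simp add: maximally_informative_def)
  have eff: "is_effect S2 (\<mu> r)" using meas_effect[OF meas r] .
  show ?thesis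
  proof (cases "\<forall>k\<in>T3. wk (\<mu> r) k = 0")
    case True
    have "(0,0,0) \<in> T3" using m1 n1 K1 by (simp add: T3_def)
    moreover have "\<forall>q. is_state S2 q \<longrightarrow> lin_apply S2 (\<mu> r) q = 0 * ev q (0,0,0)"
      using True by (simp add: decomp3)
    ultimately show ?thesis by blast
  next
    case False
    then obtain k where k: "k \<in> T3" and wne: "wk (\<mu> r) k \<noteq> 0" by blast
    have wpos: "0 < wk (\<mu> r) k" using wk_nonneg[OF eff k] wne by simp
    obtain t where t: "\<forall>q. is_state S2 q \<longrightarrow> wk (\<mu> r) k * ev q k = t * lin_apply S2 (\<mu> r) q"
      using refine_trivial[OF MI r k] by blast
    define d where "d = det_state S2 (detk k)"
    have dst: "is_state S2 d" unfolding d_def by (rule det_state_is_state[OF detk_valid[OF k]])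
    have "wk (\<mu> r) k * ev d k = t * lin_apply S2 (\<mu> r) d" using t dst by blast
    then have "wk (\<mu> r) k = t * lin_apply S2 (\<mu> r) d" using ev_detk[OF k] by (simp add: d_def)
    then have tne: "t \<noteq> 0" and lam: "lin_apply S2 (\<mu> r) d = wk (\<mu> r) k / t" using wpos by auto
    have "0 \<le> lin_apply S2 (\<mu> r) d" using effect_bounds[OF eff dst] by simp
    moreover have "\<forall>q. is_state S2 q \<longrightarrow> lin_apply S2 (\<mu> r) q = (wk (\<mu> r) k / t) * ev q k"
      using t tne by (auto simp: field_simps)
    ultimately show ?thesis using k lam by metis
  qed
qed

theorem L4:
  assumes MI: "maximally_informative S2 R \<mu>" and st: "is_state S2 p"
    and pf: "\<forall>a<n. \<forall>c<K. \<forall>x<m. p [a,c] [x,0] = P c * s c x a"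
    and Pnn: "\<forall>c<K. 0 \<le> P c" and snn: "\<forall>c<K. \<forall>x<m. \<forall>a<n. 0 \<le> s c x a"
    and ssum: "\<forall>c<K. \<forall>x<m. (\<Sum>a<n. s c x a) = 1"
    and Lb: "\<forall>c<K. \<forall>x<m. L c \<le> (\<Sum>a<n. ent_term (s c x a))"
  shows "(\<Sum>c<K. ent_term (P c) + P c * L c) \<le> (\<Sum>r\<in>R. ent_term (lin_apply S2 (\<mu> r) p))"
proof -
  have meas: "is_measurement S2 R \<mu>" using MI by (simp add: maximally_informative_def)
  have Rfin: "finite R" using meas_finite[OF meas] .
  have ex: "\<forall>r\<in>R. \<exists>z. 0 \<le> fst z \<and> snd z \<in> T3 \<and> (\<forall>q. is_state S2 q \<longrightarrow> lin_apply S2 (\<mu> r) q = fst z * ev q (snd z))"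
  proof
    fix r assume "r \<in> R"
    from single_coord[OF MI this] obtain lam k where
      "0 \<le> lam \<and> k \<in> T3 \<and> (\<forall>q. is_state S2 q \<longrightarrow> lin_apply S2 (\<mu> r) q = lam * ev q k)" by blast
    then show "\<exists>z. 0 \<le> fst z \<and> snd z \<in> T3 \<and> (\<forall>q. is_state S2 q \<longrightarrow> lin_apply S2 (\<mu> r) q = fst z * ev q (snd z))"
      by (intro exI[of _ "(lam,k)"]) simp
  qed
  from bchoice[OF ex] obtain g where g: "\<forall>r\<in>R. 0 \<le> fst (g r) \<and> snd (g r) \<in> T3 \<and> (\<forall>q. is_state S2 q \<longrightarrow> lin_apply S2 (\<mu> r) q = fst (g r) * ev q (snd (g r)))"
    by blast
  define lam where "lam r = fst (g r)" for r
  define kk where "kk r = snd (g r)" for r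
  have lamnn: "\<forall>r\<in>R. 0 \<le> lam r" and kkT: "\<forall>r\<in>R. kk r \<in> T3"
    and lk: "\<And>r q. r \<in> R \<Longrightarrow> is_state S2 q \<Longrightarrow> lin_apply S2 (\<mu> r) q = lam r * ev q (kk r)"
    using g unfolding lam_def kk_def by blast+
  define W where "W k = (\<Sum>r\<in>{r\<in>R. kk r = k}. lam r)" for k
  have Wnn: "0 \<le> W k" for k unfolding W_def using lamnn by (intro sum_nonneg) auto
  have grp: "(\<Sum>r\<in>R. g r) = (\<Sum>k\<in>T3. \<Sum>r\<in>{r\<in>R. kk r = k}. g r)" for g :: "nat \<Rightarrow> real"
    by (rule sum.group[symmetric]) (use Rfin kkT in auto)
  have F1: "(\<Sum>k\<in>T3. W k * ev q k) = 1" if q: "is_state S2 q" for q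
  proof -
    have "1 = (\<Sum>r\<in>R. lin_apply S2 (\<mu> r) q)" using meas_sum[OF meas q] by simp
    also have "\<dots> = (\<Sum>r\<in>R. lam r * ev q (kk r))" using lk q by (intro sum.cong) simp_all
    also have "\<dots> = (\<Sum>k\<in>T3. \<Sum>r\<in>{r\<in>R. kk r = k}. lam r * ev q (kk r))" by (rule grp)
    also have "\<dots> = (\<Sum>k\<in>T3. W k * ev q k)"
      unfolding W_def sum_distrib_right by (intro sum.cong refl) auto
    finally show ?thesis by simp
  qed
  have F2: "(\<Sum>x<m. W (\<alpha> (Suc 0) 0, x, \<alpha> 0 x)) = 1" if va: "valid_strat S2 \<alpha>" for \<alpha>
  proof -
    have a0: "\<forall>x<m. \<alpha> 0 x < n" and a1: "\<alpha> (Suc 0) 0 < K" using va valid2 by blast+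
    have "1 = (\<Sum>k\<in>T3. W k * ev (det_state S2 \<alpha>) k)" using F1[OF det_state_is_state[OF va]] by simp
    also have "\<dots> = (\<Sum>c<K. \<Sum>x<m. \<Sum>a<n. W (c,x,a) * (if a = \<alpha> 0 x \<and> c = \<alpha> (Suc 0) 0 then 1 else 0))"
      unfolding sum_T3 by (intro sum.cong refl) (simp add: ev_def det2)
    also have "\<dots> = (\<Sum>c<K. \<Sum>x<m. if c = \<alpha> (Suc 0) 0 then W (c,x,\<alpha> 0 x) else 0)"
    proof (intro sum.cong refl)
      fix c x assume "x \<in> {..<m}"
      then have "\<alpha> 0 x < n" using a0 by simp
      then show "(\<Sum>a<n. W (c,x,a) * (if a = \<alpha> 0 x \<and> c = \<alpha> (Suc 0) 0 then 1 else 0)) = (if c = \<alpha> (Suc 0) 0 then W (c,x,\<alpha> 0 x) else 0)"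
        by (cases "c = \<alpha> (Suc 0) 0") (simp_all add: sum.delta' if_distrib cong: if_cong)
    qed
    also have "\<dots> = (\<Sum>c<K. if c = \<alpha> (Suc 0) 0 then (\<Sum>x<m. W (c,x,\<alpha> 0 x)) else 0)"
      by (intro sum.cong refl) auto
    also have "\<dots> = (\<Sum>x<m. W (\<alpha> (Suc 0) 0,x,\<alpha> 0 x))" using a1 by (simp add: sum.delta')
    finally show ?thesis by simp
  qed
  have F3: "W (c,x,a) = W (c,x,0) \<and> (\<Sum>x'<m. W (c,x',0)) = 1" if c: "c < K" and x: "x < m" and a: "a < n" for c x a
  proof -
    define \<alpha>1 :: "nat \<Rightarrow> nat \<Rightarrow> nat" where "\<alpha>1 = (\<lambda>i y. if i = 0 then (if y = x then a else 0) else c)"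
    define \<alpha>0 :: "nat \<Rightarrow> nat \<Rightarrow> nat" where "\<alpha>0 = (\<lambda>i y. if i = 0 then 0 else c)"
    have "(\<forall>x<m. \<alpha>1 0 x < n) \<and> \<alpha>1 (Suc 0) 0 < K" using a c n1 by (simp add: \<alpha>1_def)
    then have v1: "valid_strat S2 \<alpha>1" using valid2 by blast
    have "(\<forall>x<m. \<alpha>0 0 x < n) \<and> \<alpha>0 (Suc 0) 0 < K" using c n1 by (simp add: \<alpha>0_def)
    then have v0: "valid_strat S2 \<alpha>0" using valid2 by blast
    have s1: "(\<Sum>y<m. W (c, y, if y = x then a else 0)) = 1" using F2[OF v1] by (simp add: \<alpha>1_def)
    have s0: "(\<Sum>y<m. W (c, y, 0)) = 1" using F2[OF v0] by (simp add: \<alpha>0_def)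
    have "(\<Sum>y<m. W (c, y, if y = x then a else 0)) = W (c,x,a) + (\<Sum>y\<in>{..<m}-{x}. W (c, y, if y = x then a else 0))"
      using x by (subst sum.remove[of _ x]) auto
    also have "(\<Sum>y\<in>{..<m}-{x}. W (c, y, if y = x then a else 0)) = (\<Sum>y\<in>{..<m}-{x}. W (c, y, 0))"
      by (rule sum.cong[OF refl]) auto
    finally have e1: "(\<Sum>y<m. W (c, y, if y = x then a else 0)) = W (c,x,a) + (\<Sum>y\<in>{..<m}-{x}. W (c, y, 0))" .
    have e0: "(\<Sum>y<m. W (c, y, 0)) = W (c,x,0) + (\<Sum>y\<in>{..<m}-{x}. W (c, y, 0))"
      using x by (subst sum.remove[of _ x]) auto
    show ?thesis using s1 s0 e1 e0 by linarith
  qed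
  have Wle1: "W (c,x,0) \<le> 1" if "c < K" "x < m" for c x
  proof -
    have "W (c,x,0) \<le> (\<Sum>x'<m. W (c,x',0))" using that by (intro member_le_sum Wnn) auto
    then show ?thesis using F3[OF that n1[unfolded One_nat_def Suc_le_eq]] by simp
  qed
  have "(\<Sum>r\<in>R. ent_term (lin_apply S2 (\<mu> r) p)) = (\<Sum>r\<in>R. ent_term (lam r * ev p (kk r)))"
    using lk st by (intro sum.cong) simp_all
  also have "\<dots> = (\<Sum>k\<in>T3. \<Sum>r\<in>{r\<in>R. kk r = k}. ent_term (lam r * ev p (kk r)))" by (rule grp)
  also have "\<dots> = (\<Sum>k\<in>T3. \<Sum>r\<in>{r\<in>R. kk r = k}. ent_term (lam r * ev p k))"
    by (intro sum.cong refl) auto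
  also have "\<dots> \<ge> (\<Sum>k\<in>T3. ent_term (W k * ev p k))"
  proof (intro sum_mono)
    fix k assume "k \<in> T3"
    have "ent_term (W k * ev p k) = ent_term (\<Sum>r\<in>{r\<in>R. kk r = k}. lam r * ev p k)"
      by (simp add: W_def sum_distrib_right)
    also have "\<dots> \<le> (\<Sum>r\<in>{r\<in>R. kk r = k}. ent_term (lam r * ev p k))"
      using Rfin lamnn ev_nonneg[OF st] by (intro ent_sum_ge) auto
    finally show "ent_term (W k * ev p k) \<le> (\<Sum>r\<in>{r\<in>R. kk r = k}. ent_term (lam r * ev p k))" .
  qed
  also have "(\<Sum>k\<in>T3. ent_term (W k * ev p k)) = (\<Sum>c<K. \<Sum>x<m. \<Sum>a<n. ent_term (W (c,x,0) * (P c * s c x a)))"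
    unfolding sum_T3
  proof (intro sum.cong refl)
    fix c x a assume c: "c \<in> {..<K}" and x: "x \<in> {..<m}" and a: "a \<in> {..<n}"
    have "W (c,x,a) = W (c,x,0)" using F3[of c x a] c x a by simp
    moreover have "p [a,c] [x,0] = P c * s c x a" using pf c x a by simp
    ultimately show "ent_term (W (c,x,a) * ev p (c,x,a)) = ent_term (W (c,x,0) * (P c * s c x a))"
      by (simp add: ev_def)
  qed
  also have "\<dots> \<ge> (\<Sum>c<K. \<Sum>x<m. \<Sum>a<n. W (c,x,0) * ent_term (P c * s c x a))"
    using Wnn Wle1 Pnn snn by (intro sum_mono ent_scale_ge mult_nonneg_nonneg) auto
  also have "(\<Sum>c<K. \<Sum>x<m. \<Sum>a<n. W (c,x,0) * ent_term (P c * s c x a))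
      = (\<Sum>c<K. \<Sum>x<m. W (c,x,0) * (ent_term (P c) + P c * (\<Sum>a<n. ent_term (s c x a))))"
  proof (intro sum.cong refl)
    fix c x assume c: "c \<in> {..<K}" and x: "x \<in> {..<m}"
    have "(\<Sum>a<n. W (c,x,0) * ent_term (P c * s c x a)) = W (c,x,0) * (\<Sum>a<n. s c x a * ent_term (P c) + P c * ent_term (s c x a))"
      using Pnn snn c x by (simp add: sum_distrib_left ent_term_mult)
    also have "\<dots> = W (c,x,0) * ((\<Sum>a<n. s c x a) * ent_term (P c) + P c * (\<Sum>a<n. ent_term (s c x a)))"
      by (simp add: sum.distrib sum_distrib_left sum_distrib_right)
    also have "\<dots> = W (c,x,0) * (ent_term (P c) + P c * (\<Sum>a<n. ent_term (s c x a)))"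
      using ssum c x by simp
    finally show "(\<Sum>a<n. W (c,x,0) * ent_term (P c * s c x a)) = W (c,x,0) * (ent_term (P c) + P c * (\<Sum>a<n. ent_term (s c x a)))" .
  qed
  also have "\<dots> \<ge> (\<Sum>c<K. \<Sum>x<m. W (c,x,0) * (ent_term (P c) + P c * L c))"
    using Wnn Pnn Lb by (intro sum_mono mult_left_mono add_left_mono) auto
  also have "(\<Sum>c<K. \<Sum>x<m. W (c,x,0) * (ent_term (P c) + P c * L c)) = (\<Sum>c<K. ent_term (P c) + P c * L c)"
  proof (intro sum.cong refl)
    fix c assume "c \<in> {..<K}"
    then have "(\<Sum>x<m. W (c,x,0)) = 1" using F3[of c 0 0] m1 n1 by simp
    then show "(\<Sum>x<m. W (c,x,0) * (ent_term (P c) + P c * L c)) = ent_term (P c) + P c * L c"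
      by (simp add: sum_distrib_right[symmetric])
  qed
  finally show ?thesis by simp
qed

end


definition cls :: "nat list \<Rightarrow> nat list \<Rightarrow> nat list" where
  "cls I a = map (\<lambda>i. a!i) I"

definition restr :: "nat list \<Rightarrow> nat list \<Rightarrow> (nat list \<Rightarrow> nat list \<Rightarrow> real) \<Rightarrow> nat list \<Rightarrow> nat list \<Rightarrow> real" where
  "restr I c q = (\<lambda>a x. if cls I a = c then q a x else 0)"

definition QQ :: "box list \<Rightarrow> nat list \<Rightarrow> (nat list \<Rightarrow> nat list \<Rightarrow> real) \<Rightarrow> nat list \<Rightarrow> real" where
  "QQ S I q c = (\<Sum>a\<in>outputs S. restr I c q a (replicate (length S) 0))"

locale classical_idx =
  fixes S :: "box list" and I :: "nat list"
  assumes vS: "valid_sys S" and Icl: "\<forall>i\<in>set I. i < length S \<and> fst (S!i) = 1"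
begin

abbreviation "z \<equiv> replicate (length S) (0::nat)"
lemma z_in: "z \<in> inputs S" by (rule zero_input[OF vS])

lemma cls_outf: "x \<in> inputs S \<Longrightarrow> cls I (outf \<alpha> x) = map (\<lambda>i. \<alpha> i 0) I"
proof -
  assume x: "x \<in> inputs S"
  have "outf \<alpha> x ! i = \<alpha> i 0" if "i \<in> set I" for i
  proof -
    have i: "i < length S" and f: "fst (S!i) = 1" using Icl that by auto
    have l: "length x = length S" and "x!i < fst (S!i)" using x i by (auto simp: inputs_def)
    then have "x!i = 0" using f by simp
    then show ?thesis using i l by simp
  qed
  then show ?thesis unfolding cls_def by simp
qed

lemma restr_pseudo:
  assumes ps: "pseudo S q"
  shows "pseudo S (restr I c q)"
  unfolding pseudo_def
proof (intro conjI allI impI ballI)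
  fix a x assume "a \<notin> outputs S \<or> x \<notin> inputs S"
  then show "restr I c q a x = 0" using pseudo_vanish[OF ps] by (simp add: restr_def)
next
  fix i x x' a assume i: "i < length S" and x: "x \<in> inputs S" and x': "x' \<in> inputs S"
    and ag: "\<forall>j<length S. j \<noteq> i \<longrightarrow> x!j = x'!j" and a: "a \<in> outputs S"
  show "(\<Sum>ca<snd (S ! i). restr I c q (a[i := ca]) x) = (\<Sum>ca<snd (S ! i). restr I c q (a[i := ca]) x')"
  proof (cases "i \<in> set I")
    case True
    then have "fst (S!i) = 1" using Icl by auto
    then have xi: "x!i < 1" "x'!i < 1" using x x' i by (auto simp: inputs_def)
    have "x = x'"
    proof (rule nth_equalityI)
      show "length x = length x'" using x x' by (simp add: inputs_def)
      fix j assume "j < length x"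
      then have j: "j < length S" using x by (simp add: inputs_def)
      show "x!j = x'!j" using ag j xi by (cases "j = i") auto
    qed
    then show ?thesis by simp
  next
    case False
    have "cls I (a[i:=ca]) = cls I a" for ca unfolding cls_def
    proof (rule map_cong[OF refl])
      fix j assume "j \<in> set I"
      then have "j \<noteq> i" using False by auto
      then show "a[i := ca] ! j = a ! j" by simp
    qed
    then have "(\<Sum>ca<snd (S ! i). restr I c q (a[i := ca]) y) = (if cls I a = c then (\<Sum>ca<snd (S ! i). q (a[i := ca]) y) else 0)" for y
      by (auto simp: restr_def)
    then show ?thesis using pseudo_NS[OF ps i x x' ag a] by simp
  qed
qed

lemma restr_const:
  assumes st: "is_state S q" and x: "x \<in> inputs S"
  shows "(\<Sum>a\<in>outputs S. restr I c q a x) = QQ S I q c"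
proof -
  define \<Phi> where "\<Phi> = (\<lambda>a x'. (if cls I a = c then 1 else 0) * (ones_at x a x' - ones_at z a x'))"
  have lin: "lin_apply S \<Phi> r = (\<Sum>a\<in>outputs S. restr I c r a x) - (\<Sum>a\<in>outputs S. restr I c r a z)" for r
  proof -
    have "lin_apply S \<Phi> r = lin_apply S (ones_at x) (restr I c r) - lin_apply S (ones_at z) (restr I c r)"
      unfolding \<Phi>_def lin_apply_diff_coef[symmetric] by (rule lin_apply_cong) (simp add: restr_def ones_at_def)
    then show ?thesis by (simp add: lin_apply_ones_at[OF x] lin_apply_ones_at[OF z_in])
  qed
  have "lin_apply S \<Phi> q = 0"
  proof (rule lemmaA[OF vS _ state_pseudo[OF st]], intro allI impI)
    fix \<alpha> assume va: "valid_strat S \<alpha>"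
    have e: "(\<Sum>a\<in>outputs S. restr I c (det_state S \<alpha>) a y) = (if map (\<lambda>i. \<alpha> i 0) I = c then 1 else 0)"
      if y: "y \<in> inputs S" for y
    proof -
      have "(\<Sum>a\<in>outputs S. restr I c (det_state S \<alpha>) a y) = (\<Sum>a\<in>outputs S. if a = outf \<alpha> y then (if cls I a = c then 1 else 0) else 0)"
        using y by (intro sum.cong refl) (auto simp: restr_def det_state_def)
      also have "\<dots> = (if cls I (outf \<alpha> y) = c then 1 else 0)" using outf_in_outputs[OF va y] by (simp add: sum.delta')
      finally show ?thesis using cls_outf[OF y] by simp
    qed
    show "lin_apply S \<Phi> (det_state S \<alpha>) = 0" unfolding lin e[OF x] e[OF z_in] by simp
  qed
  then show ?thesis unfolding lin QQ_def by simp
qed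

lemma QQ_nonneg: "is_state S q \<Longrightarrow> 0 \<le> QQ S I q c"
  unfolding QQ_def restr_def by (intro sum_nonneg) (auto simp: state_nonneg)

lemma restr_scaled_state:
  assumes st: "is_state S q" and pos: "QQ S I q c > 0"
  shows "is_state S (\<lambda>a x. restr I c q a x / QQ S I q c)"
  unfolding is_state_def
proof (intro conjI allI impI ballI)
  fix a x assume "a \<notin> outputs S \<or> x \<notin> inputs S"
  then show "restr I c q a x / QQ S I q c = 0" using state_vanish[OF st] by (simp add: restr_def)
next
  fix a x show "0 \<le> restr I c q a x / QQ S I q c" using pos state_nonneg[OF st] by (simp add: restr_def)
next
  fix x assume x: "x \<in> inputs S"
  show "(\<Sum>a\<in>outputs S. restr I c q a x / QQ S I q c) = 1"
    using restr_const[OF st x] pos by (simp add: sum_divide_distrib[symmetric])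
next
  fix i x x' a assume i: "i < length S" and x: "x \<in> inputs S" and x': "x' \<in> inputs S"
    and ag: "\<forall>j<length S. j \<noteq> i \<longrightarrow> x!j = x'!j" and a: "a \<in> outputs S"
  have "(\<Sum>ca<snd (S!i). restr I c q (a[i:=ca]) x) = (\<Sum>ca<snd (S!i). restr I c q (a[i:=ca]) x')"
    by (rule pseudo_NS[OF restr_pseudo[OF state_pseudo[OF st]] i x x' ag a])
  then show "(\<Sum>ca<snd (S!i). restr I c q (a[i:=ca]) x / QQ S I q c) = (\<Sum>ca<snd (S!i). restr I c q (a[i:=ca]) x' / QQ S I q c)"
    by (simp add: sum_divide_distrib[symmetric])
qed

lemma restr_zero:
  assumes st: "is_state S q" and z0: "QQ S I q c = 0"
  shows "restr I c q a x = 0"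
proof (cases "a \<in> outputs S \<and> x \<in> inputs S")
  case True
  have "(\<Sum>a\<in>outputs S. restr I c q a x) = 0" using restr_const[OF st] True z0 by simp
  moreover have "\<forall>a\<in>outputs S. 0 \<le> restr I c q a x" using state_nonneg[OF st] by (simp add: restr_def)
  ultimately show ?thesis using True by (simp add: sum_nonneg_eq_0_iff)
next
  case False then show ?thesis using state_vanish[OF st] by (auto simp: restr_def)
qed

lemma lin_restr_scale:
  assumes st: "is_state S q"
  shows "lin_apply S C (restr I c q) = QQ S I q c * lin_apply S C (\<lambda>a x. restr I c q a x / QQ S I q c)"
proof (cases "QQ S I q c = 0")
  case True
  then have "restr I c q = (\<lambda>a x. 0)" using restr_zero[OF st] by (auto simp: fun_eq_iff)
  then show ?thesis using True by (simp add: lin_apply_zero_state)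
next
  case False
  then show ?thesis by (simp add: lin_apply_scale_state[symmetric] )
qed

lemma restr_effect_bounds:
  assumes eff: "is_effect S C" and st: "is_state S q"
  shows "0 \<le> lin_apply S C (restr I c q) \<and> lin_apply S C (restr I c q) \<le> QQ S I q c"
proof (cases "QQ S I q c = 0")
  case True
  then have "restr I c q = (\<lambda>a x. 0)" using restr_zero[OF st] by (auto simp: fun_eq_iff)
  then show ?thesis using True by (simp add: lin_apply_zero_state)
next
  case False
  then have pos: "QQ S I q c > 0" using QQ_nonneg[OF st, of c] by simp
  have b: "0 \<le> lin_apply S C (\<lambda>a x. restr I c q a x / QQ S I q c) \<and> lin_apply S C (\<lambda>a x. restr I c q a x / QQ S I q c) \<le> 1"
    by (rule effect_bounds[OF eff restr_scaled_state[OF st pos]])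
  show ?thesis unfolding lin_restr_scale[OF st] using b pos
    by (simp add: mult_nonneg_nonneg mult_left_le)
qed

lemma meas_restr_sum:
  assumes meas: "is_measurement S R \<mu>" and st: "is_state S q"
  shows "(\<Sum>r\<in>R. lin_apply S (\<mu> r) (restr I c q)) = QQ S I q c"
proof (cases "QQ S I q c = 0")
  case True
  then have "restr I c q = (\<lambda>a x. 0)" using restr_zero[OF st] by (auto simp: fun_eq_iff)
  then show ?thesis using True by (simp add: lin_apply_zero_state)
next
  case False
  then have pos: "QQ S I q c > 0" using QQ_nonneg[OF st, of c] by simp
  show ?thesis unfolding lin_restr_scale[OF st] sum_distrib_left[symmetric]
    using meas_sum[OF meas restr_scaled_state[OF st pos]] by simp
qed

definition Classes :: "nat list set" where "Classes = cls I ` outputs S"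

lemma Classes_fin[simp]: "finite Classes" by (simp add: Classes_def)

lemma sum_restr: "lin_apply S C q = (\<Sum>c\<in>Classes. lin_apply S C (restr I c q))"
proof -
  have "(\<Sum>c\<in>Classes. lin_apply S C (restr I c q)) = lin_apply S C (\<lambda>a x. \<Sum>c\<in>Classes. restr I c q a x)"
    by (simp add: lin_apply_sum_state)
  also have "\<dots> = lin_apply S C q"
  proof (rule lin_apply_cong)
    fix a x assume a: "a \<in> outputs S" and "x \<in> inputs S"
    have "(\<Sum>c\<in>Classes. restr I c q a x) = (\<Sum>c\<in>Classes. if c = cls I a then q a x else 0)"
      by (intro sum.cong refl) (auto simp: restr_def)
    also have "\<dots> = q a x" using a by (simp add: Classes_def sum.delta')
    finally show "C a x * (\<Sum>c\<in>Classes. restr I c q a x) = C a x * q a x" by simp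
  qed
  finally show ?thesis by simp
qed

lemma QQ_ones: "QQ S I q c = lin_apply S (ones_at z) (restr I c q)"
  by (simp add: QQ_def lin_apply_ones_at[OF z_in])

lemma QQ_total: "is_state S q \<Longrightarrow> (\<Sum>c\<in>Classes. QQ S I q c) = 1"
  unfolding QQ_ones sum_restr[symmetric] by (simp add: lin_apply_ones_at[OF z_in] state_norm[OF _ z_in])

lemma QQ_le1: "is_state S q \<Longrightarrow> c \<in> Classes \<Longrightarrow> QQ S I q c \<le> 1"
  using QQ_total[of q] member_le_sum[of c Classes "QQ S I q"] QQ_nonneg by simp

theorem L5:
  assumes MI: "maximally_informative S R \<mu>" and st: "is_state S p"
  shows "(\<Sum>c\<in>Classes. ent_term (QQ S I p c)) \<le> (\<Sum>r\<in>R. ent_term (lin_apply S (\<mu> r) p))"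
proof -
  have meas: "is_measurement S R \<mu>" using MI by (simp add: maximally_informative_def)
  have Rfin: "finite R" using meas_finite[OF meas] .
  have eff: "is_effect S (\<mu> r)" if "r \<in> R" for r using meas_effect[OF meas that] .
  define R' where "R' = to_nat ` (R \<times> Classes)"
  define \<nu> where "\<nu> s = (\<lambda>a x. \<mu> (fst (from_nat s :: nat \<times> nat list)) a x * (if cls I a = snd (from_nat s :: nat \<times> nat list) then 1 else 0))" for s
  define f where "f s = fst (from_nat s :: nat \<times> nat list)" for s
  have inj: "inj_on to_nat A" for A :: "(nat \<times> nat list) set" by (meson inj_on_subset inj_to_nat subset_UNIV)
  have \<nu>val: "lin_apply S (\<nu> (to_nat (r,c))) q = lin_apply S (\<mu> r) (restr I c q)" for r c q
    unfolding \<nu>_def by (rule lin_apply_cong) (simp add: restr_def)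
  have M': "is_measurement S R' \<nu>"
    unfolding is_measurement_def
  proof (intro conjI ballI allI impI)
    show "finite R'" unfolding R'_def using Rfin by simp
  next
    fix s assume "s \<in> R'"
    then obtain r c where rc: "r \<in> R" "c \<in> Classes" and s: "s = to_nat (r,c)" unfolding R'_def by blast
    show "is_effect S (\<nu> s)" unfolding is_effect_def s \<nu>val
    proof (intro allI impI)
      fix q assume q: "is_state S q"
      have "0 \<le> lin_apply S (\<mu> r) (restr I c q) \<and> lin_apply S (\<mu> r) (restr I c q) \<le> QQ S I q c"
        by (rule restr_effect_bounds[OF eff[OF rc(1)] q])
      moreover have "QQ S I q c \<le> 1" by (rule QQ_le1[OF q rc(2)])
      ultimately show "0 \<le> lin_apply S (\<mu> r) (restr I c q) \<and> lin_apply S (\<mu> r) (restr I c q) \<le> 1" by linarith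
    qed
  next
    fix q assume q: "is_state S q"
    have "(\<Sum>s\<in>R'. lin_apply S (\<nu> s) q) = (\<Sum>rc\<in>R \<times> Classes. lin_apply S (\<nu> (to_nat rc)) q)"
      unfolding R'_def by (rule sum.reindex[OF inj, unfolded comp_def])
    also have "\<dots> = (\<Sum>r\<in>R. \<Sum>c\<in>Classes. lin_apply S (\<nu> (to_nat (r,c))) q)"
      by (simp only: sum.cartesian_product split_def prod.collapse)
    also have "\<dots> = (\<Sum>c\<in>Classes. \<Sum>r\<in>R. lin_apply S (\<mu> r) (restr I c q))"
      unfolding \<nu>val by (rule sum.swap)
    also have "\<dots> = (\<Sum>c\<in>Classes. QQ S I q c)" by (intro sum.cong refl meas_restr_sum[OF meas q])
    also have "\<dots> = 1" by (rule QQ_total[OF q])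
    finally show "(\<Sum>s\<in>R'. lin_apply S (\<nu> s) q) = 1" .
  qed
  have ref: "refines_via S R' \<nu> f R \<mu>"
    unfolding refines_via_def
  proof (intro conjI ballI allI impI)
    fix s assume "s \<in> R'"
    then show "f s \<in> R" unfolding R'_def f_def by auto
  next
    fix r q assume r: "r \<in> R" and q: "is_state S q"
    have set: "{s \<in> R'. f s = r} = to_nat ` ({r} \<times> Classes)"
      unfolding R'_def f_def using r by auto
    have "(\<Sum>s\<in>{s \<in> R'. f s = r}. lin_apply S (\<nu> s) q) = (\<Sum>rc\<in>{r} \<times> Classes. lin_apply S (\<nu> (to_nat rc)) q)"
      unfolding set by (rule sum.reindex[OF inj, unfolded comp_def])
    also have "\<dots> = (\<Sum>r'\<in>{r}. \<Sum>c\<in>Classes. lin_apply S (\<nu> (to_nat (r',c))) q)"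
      by (simp only: sum.cartesian_product split_def prod.collapse)
    also have "\<dots> = (\<Sum>c\<in>Classes. lin_apply S (\<mu> r) (restr I c q))" by (simp add: \<nu>val)
    also have "\<dots> = lin_apply S (\<mu> r) q" by (rule sum_restr[symmetric])
    finally show "lin_apply S (\<mu> r) q = (\<Sum>s\<in>{s \<in> R'. f s = r}. lin_apply S (\<nu> s) q)" by simp
  qed
  have triv: "trivial_refinement S R' \<nu> f \<mu>" using MI M' ref unfolding maximally_informative_def by blast
  have tt: "\<exists>t. \<forall>q. is_state S q \<longrightarrow> lin_apply S (\<mu> r) (restr I c q) = t * lin_apply S (\<mu> r) q"
    if r: "r \<in> R" and c: "c \<in> Classes" for r c
  proof -
    have "to_nat (r,c) \<in> R'" using r c by (simp add: R'_def)
    then obtain t where "\<forall>q. is_state S q \<longrightarrow> lin_apply S (\<nu> (to_nat (r,c))) q = t * lin_apply S (\<mu> (f (to_nat (r,c)))) q"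
      using triv unfolding trivial_refinement_def by blast
    then show ?thesis unfolding \<nu>val by (auto simp: f_def)
  qed
  define y where "y r c = lin_apply S (\<mu> r) (restr I c p)" for r c
  have ynn: "0 \<le> y r c" if "r \<in> R" for r c using restr_effect_bounds[OF eff[OF that] st] by (simp add: y_def)
  have qsum: "lin_apply S (\<mu> r) p = (\<Sum>c\<in>Classes. y r c)" for r unfolding y_def by (rule sum_restr)
  have key: "lin_apply S (\<mu> r) p \<le> QQ S I p c" if r: "r \<in> R" and c: "c \<in> Classes" and ypos: "y r c > 0" for r c
  proof -
    obtain t where t: "\<forall>q. is_state S q \<longrightarrow> lin_apply S (\<mu> r) (restr I c q) = t * lin_apply S (\<mu> r) q"
      using tt[OF r c] by blast
    have tne: "t \<noteq> 0" using t st ypos by (auto simp: y_def)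
    have other: "y r c' = 0" if c': "c' \<in> Classes" "c' \<noteq> c" for c'
    proof (cases "QQ S I p c' = 0")
      case True
      then have "restr I c' p = (\<lambda>a x. 0)" using restr_zero[OF st] by (auto simp: fun_eq_iff)
      then show ?thesis by (simp add: y_def lin_apply_zero_state)
    next
      case False
      then have pos: "QQ S I p c' > 0" using QQ_nonneg[OF st, of c'] by simp
      define q' where "q' = (\<lambda>a x. restr I c' p a x / QQ S I p c')"
      have q': "is_state S q'" unfolding q'_def by (rule restr_scaled_state[OF st pos])
      have "restr I c q' = (\<lambda>a x. 0)" using c' by (auto simp: fun_eq_iff restr_def q'_def)
      moreover have "lin_apply S (\<mu> r) (restr I c q') = t * lin_apply S (\<mu> r) q'" using t q' by blast
      ultimately have "t * lin_apply S (\<mu> r) q' = 0" by (simp add: lin_apply_zero_state)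
      then have "lin_apply S (\<mu> r) q' = 0" using tne by simp
      then show ?thesis unfolding y_def lin_restr_scale[OF st] q'_def[symmetric] by simp
    qed
    have "lin_apply S (\<mu> r) p = y r c + (\<Sum>c'\<in>Classes - {c}. y r c')"
      unfolding qsum using c by (subst sum.remove[of _ c]) auto
    also have "(\<Sum>c'\<in>Classes - {c}. y r c') = 0" using other by (intro sum.neutral) auto
    finally have "lin_apply S (\<mu> r) p = y r c" by simp
    then show ?thesis using restr_effect_bounds[OF eff[OF r] st] by (simp add: y_def)
  qed
  have per_r: "(\<Sum>c\<in>Classes. y r c * (- log 2 (QQ S I p c))) \<le> ent_term (lin_apply S (\<mu> r) p)" if r: "r \<in> R" for r
  proof (cases "lin_apply S (\<mu> r) p = 0")
    case True
    then have "\<forall>c\<in>Classes. y r c = 0" using qsum[of r] ynn[OF r] by (simp add: sum_nonneg_eq_0_iff)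
    then show ?thesis using True by simp
  next
    case False
    then have qpos: "lin_apply S (\<mu> r) p > 0" using effect_bounds[OF eff[OF r] st] by simp
    have "(\<Sum>c\<in>Classes. y r c * (- log 2 (QQ S I p c))) \<le> (\<Sum>c\<in>Classes. y r c * (- log 2 (lin_apply S (\<mu> r) p)))"
    proof (intro sum_mono)
      fix c assume c: "c \<in> Classes"
      show "y r c * (- log 2 (QQ S I p c)) \<le> y r c * (- log 2 (lin_apply S (\<mu> r) p))"
      proof (cases "y r c = 0")
        case True then show ?thesis by simp
      next
        case False
        then have yp: "y r c > 0" using ynn[OF r, of c] by simp
        have "log 2 (lin_apply S (\<mu> r) p) \<le> log 2 (QQ S I p c)"
          using key[OF r c yp] qpos by simp
        then show ?thesis using yp by (intro mult_left_mono) auto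
      qed
    qed
    also have "\<dots> = (\<Sum>c\<in>Classes. y r c) * (- log 2 (lin_apply S (\<mu> r) p))"
      by (rule sum_distrib_right[symmetric])
    also have "\<dots> = ent_term (lin_apply S (\<mu> r) p)"
      unfolding qsum[symmetric] ent_term_def using qpos by simp
    finally show ?thesis .
  qed
  have "(\<Sum>c\<in>Classes. ent_term (QQ S I p c)) = (\<Sum>c\<in>Classes. (\<Sum>r\<in>R. y r c) * (- log 2 (QQ S I p c)))"
  proof (intro sum.cong refl)
    fix c assume "c \<in> Classes"
    have ys: "(\<Sum>r\<in>R. y r c) = QQ S I p c" unfolding y_def by (rule meas_restr_sum[OF meas st])
    show "ent_term (QQ S I p c) = (\<Sum>r\<in>R. y r c) * (- log 2 (QQ S I p c))"
      unfolding ys using QQ_nonneg[OF st, of c] by (auto simp: ent_term_def)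
  qed
  also have "\<dots> = (\<Sum>r\<in>R. \<Sum>c\<in>Classes. y r c * (- log 2 (QQ S I p c)))"
    unfolding sum_distrib_right by (rule sum.swap)
  also have "\<dots> \<le> (\<Sum>r\<in>R. ent_term (lin_apply S (\<mu> r) p))" by (intro sum_mono per_r)
  finally show ?thesis .
qed

end


declare sum.lessThan_Suc[simp del]

definition bt :: "nat \<Rightarrow> nat" where "bt k = (if k = 0 then 0 else 1)"

lemma bt_lt2[simp]: "bt k < 2" by (simp add: bt_def)
lemma bt_cases: "bt k = 0 \<or> bt k = 1" by (simp add: bt_def)

lemma sum4_reorder:
  "(\<Sum>a0\<in>I0. \<Sum>a1\<in>I1. \<Sum>a2\<in>I2. \<Sum>a3\<in>I3. F a0 a1 a2 a3) = (\<Sum>a1\<in>I1. \<Sum>a3\<in>I3. \<Sum>a0\<in>I0. \<Sum>a2\<in>I2. F a0 a1 a2 a3)"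
proof -
  have "(\<Sum>a0\<in>I0. \<Sum>a1\<in>I1. \<Sum>a2\<in>I2. \<Sum>a3\<in>I3. F a0 a1 a2 a3) = (\<Sum>a1\<in>I1. \<Sum>a0\<in>I0. \<Sum>a2\<in>I2. \<Sum>a3\<in>I3. F a0 a1 a2 a3)"
    by (rule sum.swap)
  also have "\<dots> = (\<Sum>a1\<in>I1. \<Sum>a0\<in>I0. \<Sum>a3\<in>I3. \<Sum>a2\<in>I2. F a0 a1 a2 a3)"
    by (intro sum.cong refl sum.swap)
  also have "\<dots> = (\<Sum>a1\<in>I1. \<Sum>a3\<in>I3. \<Sum>a0\<in>I0. \<Sum>a2\<in>I2. F a0 a1 a2 a3)"
    by (intro sum.cong refl sum.swap)
  finally show ?thesis .
qed

lemma sum_spike: "(\<Sum>i<Suc N. if i = 0 then u else v) = u + real N * v"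
  by (subst sum.lessThan_Suc_shift) simp

lemma len4: "length a = Suc (Suc (Suc (Suc 0))) \<Longrightarrow> \<exists>a0 a1 a2 a3. a = [a0,a1,a2,a3]"
  by (simp add: length_Suc_conv) blast

locale constr =
  fixes NA NB Nu Nv :: nat and sA sB :: real
  assumes NA: "1 \<le> NA" and NB: "1 \<le> NB" and Nu: "1 \<le> Nu" and Nv: "1 \<le> Nv"
    and sA: "0 \<le> sA" "sA \<le> 1" and sB: "0 \<le> sB" "sB \<le> 1"
begin

abbreviation "SX \<equiv> [(2::nat, Suc Nv), (Suc 0, Suc NA)]"
abbreviation "SY \<equiv> [(2::nat, Suc (Suc Nu)), (Suc 0, Suc NB)]"
abbreviation "S4 \<equiv> [(2::nat, Suc Nv), (Suc 0, Suc NA), (2::nat, Suc (Suc Nu)), (Suc 0, Suc NB)]"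

lemma SXY: "SX @ SY = S4" by simp

definition PA :: "nat \<Rightarrow> real" where "PA A = (if A = 0 then 1 - sA else sA / NA)"
definition PB :: "nat \<Rightarrow> real" where "PB B = (if B = 0 then 1 - sB else sB / NB)"
definition fX :: "nat \<Rightarrow> nat \<Rightarrow> nat \<Rightarrow> real" where
  "fX a0 x0 B = (if x0 = bt B then (if a0 = 0 then 1 else 0) else (if a0 = 0 then 0 else 1 / Nv))"
definition gY :: "nat \<Rightarrow> nat \<Rightarrow> nat \<Rightarrow> nat \<Rightarrow> real" where
  "gY a2 y A B = (if y = bt A then (if a2 = bt B then 1 else 0) else (if a2 < 2 then 0 else 1 / Nu))"

lemma PA_nn: "0 \<le> PA A" using sA NA by (simp add: PA_def)
lemma PB_nn: "0 \<le> PB B" using sB NB by (simp add: PB_def)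
lemma fX_nn: "0 \<le> fX a0 x0 B" using Nv by (simp add: fX_def)
lemma gY_nn: "0 \<le> gY a2 y A B" using Nu by (simp add: gY_def)

lemma PA_sum: "(\<Sum>A<Suc NA. PA A) = 1"
  unfolding PA_def sum_spike using NA by simp
lemma PB_sum: "(\<Sum>B<Suc NB. PB B) = 1"
  unfolding PB_def sum_spike using NB by simp
lemma fX_sum: "(\<Sum>a0<Suc Nv. fX a0 x0 B) = 1"
proof (cases "x0 = bt B")
  case True then show ?thesis by (simp add: fX_def sum.delta)
next
  case False
  then have "(\<Sum>a0<Suc Nv. fX a0 x0 B) = (\<Sum>a0<Suc Nv. if a0 = 0 then 0 else 1 / Nv)"
    by (simp add: fX_def)
  also have "\<dots> = 1" unfolding sum_spike using Nv by simp
  finally show ?thesis .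
qed
lemma gY_sum: "(\<Sum>a2<Suc (Suc Nu). gY a2 y A B) = 1"
proof (cases "y = bt A")
  case True
  have "bt B < Suc (Suc Nu)" using bt_lt2[of B] by linarith
  then show ?thesis using True by (simp add: gY_def sum.delta)
next
  case False
  then have "(\<Sum>a2<Suc (Suc Nu). gY a2 y A B) = (\<Sum>a2<Suc (Suc Nu). if a2 < 2 then 0 else 1 / Nu)"
    by (simp add: gY_def)
  also have "\<dots> = (\<Sum>a2<Nu. 1 / Nu)" by (simp only: sum.lessThan_Suc_shift) simp
  also have "\<dots> = 1" using Nu by simp
  finally show ?thesis .
qed

definition pj :: "nat list \<Rightarrow> nat list \<Rightarrow> real" where
  "pj a x = (if a \<in> outputs S4 \<and> x \<in> inputs S4 then PA (a!1) * PB (a!3) * fX (a!0) (x!0) (a!3) * gY (a!2) (x!2) (a!1) (a!3) else 0)"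

lemma out4: "a \<in> outputs S4 \<longleftrightarrow> (\<exists>a0 a1 a2 a3. a = [a0,a1,a2,a3] \<and> a0 < Suc Nv \<and> a1 < Suc NA \<and> a2 < Suc (Suc Nu) \<and> a3 < Suc NB)"
proof
  assume a: "a \<in> outputs S4"
  then have "length a = Suc (Suc (Suc (Suc 0)))" by (simp add: outputs_def)
  then obtain a0 a1 a2 a3 where "a = [a0,a1,a2,a3]" using len4 by blast
  with a show "\<exists>a0 a1 a2 a3. a = [a0,a1,a2,a3] \<and> a0 < Suc Nv \<and> a1 < Suc NA \<and> a2 < Suc (Suc Nu) \<and> a3 < Suc NB"
    by (simp add: outputs_Cons_iff)
qed (auto simp: outputs_Cons_iff)

lemma in4: "x \<in> inputs S4 \<longleftrightarrow> (\<exists>x0 x2. x = [x0,0,x2,0] \<and> x0 < 2 \<and> x2 < 2)"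
proof
  assume x: "x \<in> inputs S4"
  then have "length x = Suc (Suc (Suc (Suc 0)))" by (simp add: inputs_def)
  then obtain x0 x1 x2 x3 where "x = [x0,x1,x2,x3]" using len4 by blast
  with x show "\<exists>x0 x2. x = [x0,0,x2,0] \<and> x0 < 2 \<and> x2 < 2"
    by (simp add: inputs_Cons_iff)
qed (auto simp: inputs_Cons_iff)

lemma pj_val: "a0 < Suc Nv \<Longrightarrow> a1 < Suc NA \<Longrightarrow> a2 < Suc (Suc Nu) \<Longrightarrow> a3 < Suc NB \<Longrightarrow> x0 < 2 \<Longrightarrow> x2 < 2 \<Longrightarrow>
  pj [a0,a1,a2,a3] [x0,0,x2,0] = PA a1 * PB a3 * fX a0 x0 a3 * gY a2 x2 a1 a3"
  by (simp add: pj_def outputs_Cons_iff inputs_Cons_iff)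

lemma sum_out4: "(\<Sum>a\<in>outputs S4. F a) = (\<Sum>a0<Suc Nv. \<Sum>a1<Suc NA. \<Sum>a2<Suc (Suc Nu). \<Sum>a3<Suc NB. F [a0,a1,a2,a3])"
  by (simp add: sum_outputs_Cons)

lemma pj_norm: "x \<in> inputs S4 \<Longrightarrow> (\<Sum>a\<in>outputs S4. pj a x) = 1"
proof -
  assume "x \<in> inputs S4"
  then obtain x0 x2 where x: "x = [x0,0,x2,0]" "x0 < 2" "x2 < 2" using in4 by blast
  have "(\<Sum>a\<in>outputs S4. pj a x) = (\<Sum>a0<Suc Nv. \<Sum>a1<Suc NA. \<Sum>a2<Suc (Suc Nu). \<Sum>a3<Suc NB.
         PA a1 * PB a3 * fX a0 x0 a3 * gY a2 x2 a1 a3)"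
    unfolding sum_out4 x(1) using x by (intro sum.cong refl) (simp add: pj_val)
  also have "\<dots> = (\<Sum>a1<Suc NA. \<Sum>a3<Suc NB. \<Sum>a0<Suc Nv. \<Sum>a2<Suc (Suc Nu).
         PA a1 * PB a3 * fX a0 x0 a3 * gY a2 x2 a1 a3)" by (rule sum4_reorder)
  also have "\<dots> = (\<Sum>a1<Suc NA. \<Sum>a3<Suc NB. PA a1 * PB a3 * ((\<Sum>a0<Suc Nv. fX a0 x0 a3) * (\<Sum>a2<Suc (Suc Nu). gY a2 x2 a1 a3)))"
  proof (intro sum.cong refl)
    fix a1 a3
    show "(\<Sum>a0<Suc Nv. \<Sum>a2<Suc (Suc Nu). PA a1 * PB a3 * fX a0 x0 a3 * gY a2 x2 a1 a3) =
      PA a1 * PB a3 * ((\<Sum>a0<Suc Nv. fX a0 x0 a3) * (\<Sum>a2<Suc (Suc Nu). gY a2 x2 a1 a3))"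
    proof -
      have "PA a1 * PB a3 * ((\<Sum>a0<Suc Nv. fX a0 x0 a3) * (\<Sum>a2<Suc (Suc Nu). gY a2 x2 a1 a3))
          = PA a1 * PB a3 * (\<Sum>a0<Suc Nv. \<Sum>a2<Suc (Suc Nu). fX a0 x0 a3 * gY a2 x2 a1 a3)"
        by (simp only: sum_product)
      also have "\<dots> = (\<Sum>a0<Suc Nv. \<Sum>a2<Suc (Suc Nu). PA a1 * PB a3 * (fX a0 x0 a3 * gY a2 x2 a1 a3))"
        by (simp only: sum_distrib_left)
      finally show ?thesis by (simp add: mult_ac)
    qed
  qed
  also have "\<dots> = (\<Sum>a1<Suc NA. PA a1) * (\<Sum>a3<Suc NB. PB a3)"
    by (simp add: fX_sum gY_sum sum_product)
  also have "\<dots> = 1" by (simp add: PA_sum PB_sum)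
  finally show ?thesis .
qed

lemma pj_state: "is_state S4 pj"
  unfolding is_state_def
proof (intro conjI allI impI ballI)
  fix a x assume "a \<notin> outputs S4 \<or> x \<notin> inputs S4"
  then show "pj a x = 0" by (auto simp: pj_def)
next
  fix a x show "0 \<le> pj a x"
    by (simp add: pj_def PA_nn PB_nn fX_nn gY_nn)
next
  fix x assume "x \<in> inputs S4" then show "(\<Sum>a\<in>outputs S4. pj a x) = 1" by (rule pj_norm)
next
  fix i x x' a assume i: "i < length S4" and x: "x \<in> inputs S4" and x': "x' \<in> inputs S4"
    and ag: "\<forall>j<length S4. j \<noteq> i \<longrightarrow> x!j = x'!j" and a: "a \<in> outputs S4"
  obtain x0 x2 where xx: "x = [x0,0,x2,0]" "x0 < 2" "x2 < 2" using in4 x by blast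
  obtain y0 y2 where yy: "x' = [y0,0,y2,0]" "y0 < 2" "y2 < 2" using in4 x' by blast
  obtain a0 a1 a2 a3 where aa: "a = [a0,a1,a2,a3]" "a0 < Suc Nv" "a1 < Suc NA" "a2 < Suc (Suc Nu)" "a3 < Suc NB"
    using out4 a by blast
  have i4: "i = 0 \<or> i = 1 \<or> i = 2 \<or> i = 3" using i by auto
  show "(\<Sum>c<snd (S4 ! i). pj (a[i := c]) x) = (\<Sum>c<snd (S4 ! i). pj (a[i := c]) x')"
  proof -
    consider "i = 0" | "i = 2" | "i = 1 \<or> i = 3" using i4 by blast
    then show ?thesis
    proof cases
      case 1
      have "x!2 = x'!2" using ag 1 by simp
      then have "x2 = y2" using xx yy by simp
      have e: "(\<Sum>c<Suc Nv. pj [c,a1,a2,a3] [z0,0,x2,0]) = PA a1 * PB a3 * gY a2 x2 a1 a3" if "z0 < 2" for z0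
      proof -
        have "(\<Sum>c<Suc Nv. pj [c,a1,a2,a3] [z0,0,x2,0]) = (\<Sum>c<Suc Nv. PA a1 * PB a3 * gY a2 x2 a1 a3 * fX c z0 a3)"
          using aa xx that by (intro sum.cong refl) (simp add: pj_val)
        also have "\<dots> = PA a1 * PB a3 * gY a2 x2 a1 a3" by (simp add: sum_distrib_left[symmetric] fX_sum)
        finally show ?thesis .
      qed
      show ?thesis using 1 aa xx yy e[OF xx(2)] e[OF yy(2)] \<open>x2 = y2\<close> by simp
    next
      case 2
      have "x!0 = x'!0" using ag 2 by simp
      then have "x0 = y0" using xx yy by simp
      have e: "(\<Sum>c<Suc (Suc Nu). pj [a0,a1,c,a3] [x0,0,z2,0]) = PA a1 * PB a3 * fX a0 x0 a3" if "z2 < 2" for z2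
      proof -
        have "(\<Sum>c<Suc (Suc Nu). pj [a0,a1,c,a3] [x0,0,z2,0]) = (\<Sum>c<Suc (Suc Nu). PA a1 * PB a3 * fX a0 x0 a3 * gY c z2 a1 a3)"
          using aa xx that by (intro sum.cong refl) (simp add: pj_val)
        also have "\<dots> = PA a1 * PB a3 * fX a0 x0 a3" by (simp add: sum_distrib_left[symmetric] gY_sum)
        finally show ?thesis .
      qed
      show ?thesis using 2 aa xx yy e[OF xx(3)] e[OF yy(3)] \<open>x0 = y0\<close> by simp
    next
      case 3
      have "x!0 = x'!0" "x!2 = x'!2" using ag 3 by auto
      then have "x0 = y0" "x2 = y2" using xx yy by simp_all
      then have "x = x'" using xx yy by simp
      then show ?thesis by simp
    qed
  qed
qed

end


declare sum.lessThan_Suc[simp del]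

lemma sum_pair: "(\<Sum>x\<in>A\<times>B. f x) = (\<Sum>a\<in>A. \<Sum>b\<in>B. f (a,b))"
  by (simp add: sum.cartesian_product)

lemma me_upper:
  assumes st: "is_state S p" and MI: "maximally_informative S R \<mu>"
  shows "meas_entropy S p \<le> (\<Sum>r\<in>R. ent_term (lin_apply S (\<mu> r) p))"
  unfolding meas_entropy_def
proof (rule cInf_lower)
  show "(\<Sum>r\<in>R. ent_term (lin_apply S (\<mu> r) p)) \<in> {\<Sum>r\<in>R. ent_term (lin_apply S (\<mu> r) p) |R \<mu>. maximally_informative S R \<mu>}"
    using MI by blast
  show "bdd_below {\<Sum>r\<in>R. ent_term (lin_apply S (\<mu> r) p) |R \<mu>. maximally_informative S R \<mu>}"
  proof (rule bdd_belowI[of _ 0], clarify)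
    fix R' \<mu>' assume "maximally_informative S R' \<mu>'"
    then have meas: "is_measurement S R' \<mu>'" by (simp add: maximally_informative_def)
    show "0 \<le> (\<Sum>r\<in>R'. ent_term (lin_apply S (\<mu>' r) p))"
      using effect_bounds[OF meas_effect[OF meas] st] by (intro sum_nonneg ent_term_nonneg) auto
  qed
qed

lemma me_lower:
  assumes ex: "maximally_informative S R0 \<mu>0"
    and lb: "\<And>R \<mu>. maximally_informative S R \<mu> \<Longrightarrow> L \<le> (\<Sum>r\<in>R. ent_term (lin_apply S (\<mu> r) p))"
  shows "L \<le> meas_entropy S p"
  unfolding meas_entropy_def
  by (rule cInf_greatest) (use ex lb in auto)

context twobox begin

lemma prod_state:
  assumes vanish: "\<And>a x. \<not> (a \<in> outputs S2 \<and> x \<in> inputs S2) \<Longrightarrow> p a x = 0"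
    and pf: "\<forall>a<n. \<forall>c<K. \<forall>x<m. p [a,c] [x,0] = P c * s c x a"
    and Pnn: "\<forall>c<K. 0 \<le> P c" and snn: "\<forall>c<K. \<forall>x<m. \<forall>a<n. 0 \<le> s c x a"
    and Psum: "(\<Sum>c<K. P c) = 1"
    and ssum: "\<forall>c<K. \<forall>x<m. (\<Sum>a<n. s c x a) = 1"
  shows "is_state S2 p"
  unfolding is_state_def
proof (intro conjI allI impI ballI)
  fix a x assume "a \<notin> outputs S2 \<or> x \<notin> inputs S2" then show "p a x = 0" using vanish by blast
next
  fix a x show "0 \<le> p a x"
  proof (cases "a \<in> outputs S2 \<and> x \<in> inputs S2")
    case True
    then obtain a0 c x0 where "a = [a0,c]" "a0 < n" "c < K" "x = [x0,0]" "x0 < m" using out2 in2 by blast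
    then show ?thesis using pf Pnn snn by simp
  next
    case False then show ?thesis using vanish by simp
  qed
next
  fix x assume "x \<in> inputs S2"
  then obtain x0 where x: "x = [x0,0]" "x0 < m" using in2 by blast
  have "(\<Sum>a\<in>outputs S2. p a x) = (\<Sum>a0<n. \<Sum>c<K. P c * s c x0 a0)"
    unfolding x(1) using x(2) pf by (simp add: sum_outputs_Cons)
  also have "\<dots> = (\<Sum>c<K. P c * (\<Sum>a0<n. s c x0 a0))" by (simp add: sum_distrib_left sum.swap[of _ "{..<n}"])
  also have "\<dots> = 1" using ssum x(2) Psum by simp
  finally show "(\<Sum>a\<in>outputs S2. p a x) = 1" .
next
  fix i x x' a assume i: "i < length S2" and x: "x \<in> inputs S2" and x': "x' \<in> inputs S2"
    and ag: "\<forall>j<length S2. j \<noteq> i \<longrightarrow> x!j = x'!j" and a: "a \<in> outputs S2"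
  obtain x0 where xx: "x = [x0,0]" "x0 < m" using in2 x by blast
  obtain y0 where yy: "x' = [y0,0]" "y0 < m" using in2 x' by blast
  obtain a0 c where aa: "a = [a0,c]" "a0 < n" "c < K" using out2 a by blast
  show "(\<Sum>ca<snd (S2 ! i). p (a[i := ca]) x) = (\<Sum>ca<snd (S2 ! i). p (a[i := ca]) x')"
  proof (cases "i = 0")
    case True
    have e: "(\<Sum>ca<n. p [ca,c] [z0,0]) = P c" if "z0 < m" for z0
      using pf aa that ssum by (simp add: sum_distrib_left[symmetric])
    show ?thesis using True aa xx yy e[OF xx(2)] e[OF yy(2)] by simp
  next
    case False
    then have "i = 1" using i by simp
    then have "x!0 = x'!0" using ag by simp
    then have "x = x'" using xx yy by simp
    then show ?thesis by simp
  qed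
qed

definition Kc :: "(nat list \<times> nat list) set" where
  "Kc = (\<lambda>(a,c). ([a,c],[0,0])) ` ({..<n} \<times> {..<K})"

lemma Kc_meas: "maximally_informative S2 (to_nat ` Kc) coordM"
proof (rule coord_meas_maxinf[OF vS2])
  show "finite Kc" by (simp add: Kc_def)
  show "Kc \<subseteq> outputs S2 \<times> inputs S2" using m1 by (auto simp: Kc_def outputs_Cons_iff inputs_Cons_iff)
  show "\<forall>\<alpha>. valid_strat S2 \<alpha> \<longrightarrow> card {k \<in> Kc. fst k = outf \<alpha> (snd k)} = 1"
  proof (intro allI impI)
    fix \<alpha> assume va: "valid_strat S2 \<alpha>"
    have a0: "\<alpha> 0 0 < n" and a1: "\<alpha> (Suc 0) 0 < K" using va valid2 m1 by auto
    have "{k \<in> Kc. fst k = outf \<alpha> (snd k)} = {([\<alpha> 0 0, \<alpha> (Suc 0) 0],[0,0])}"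
      using a0 a1 by (auto simp: Kc_def outf_Cons2)
    then show "card {k \<in> Kc. fst k = outf \<alpha> (snd k)} = 1" by simp
  qed
qed

lemma Kc_entropy:
  assumes pf: "\<forall>a<n. \<forall>c<K. \<forall>x<m. p [a,c] [x,0] = P c * s c x a"
    and Pnn: "\<forall>c<K. 0 \<le> P c" and snn: "\<forall>c<K. \<forall>x<m. \<forall>a<n. 0 \<le> s c x a"
    and ssum: "\<forall>c<K. \<forall>x<m. (\<Sum>a<n. s c x a) = 1"
  shows "(\<Sum>r\<in>to_nat ` Kc. ent_term (lin_apply S2 (coordM r) p)) = (\<Sum>c<K. ent_term (P c) + P c * (\<Sum>a<n. ent_term (s c 0 a)))"
proof -
  have inj: "inj_on to_nat Kc" by (meson inj_on_subset inj_to_nat subset_UNIV)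
  have inj2: "inj_on (\<lambda>(a,c). ([a,c],[0::nat,0::nat])) ({..<n} \<times> {..<K})" by (auto simp: inj_on_def)
  have "(\<Sum>r\<in>to_nat ` Kc. ent_term (lin_apply S2 (coordM r) p)) = (\<Sum>k\<in>Kc. ent_term (lin_apply S2 (coordM (to_nat k)) p))"
    by (rule sum.reindex[OF inj, unfolded comp_def])
  also have "\<dots> = (\<Sum>ac\<in>{..<n} \<times> {..<K}. ent_term (lin_apply S2 (coordM (to_nat ((\<lambda>(a,c). ([a,c],[0::nat,0::nat])) ac))) p))"
    unfolding Kc_def by (rule sum.reindex[OF inj2, unfolded comp_def])
  also have "\<dots> = (\<Sum>a<n. \<Sum>c<K. ent_term (P c * s c 0 a))"
    unfolding sum_pair using m1 pf
    by (intro sum.cong refl) (simp add: coordM_to_nat lin_apply_coord outputs_Cons_iff inputs_Cons_iff)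
  also have "\<dots> = (\<Sum>c<K. \<Sum>a<n. s c 0 a * ent_term (P c) + P c * ent_term (s c 0 a))"
    using Pnn snn m1 by (subst sum.swap) (intro sum.cong refl ent_term_mult; simp)
  also have "\<dots> = (\<Sum>c<K. ent_term (P c) + P c * (\<Sum>a<n. ent_term (s c 0 a)))"
  proof (intro sum.cong refl)
    fix c assume "c \<in> {..<K}"
    then have "(\<Sum>a<n. s c 0 a) = 1" using ssum m1 by simp
    then show "(\<Sum>a<n. s c 0 a * ent_term (P c) + P c * ent_term (s c 0 a)) = ent_term (P c) + P c * (\<Sum>a<n. ent_term (s c 0 a))"
      by (simp add: sum.distrib sum_distrib_left[symmetric] sum_distrib_right[symmetric])
  qed
  finally show ?thesis .
qed

theorem me_twobox:
  assumes st: "is_state S2 p"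
    and pf: "\<forall>a<n. \<forall>c<K. \<forall>x<m. p [a,c] [x,0] = P c * s c x a"
    and Pnn: "\<forall>c<K. 0 \<le> P c" and snn: "\<forall>c<K. \<forall>x<m. \<forall>a<n. 0 \<le> s c x a"
    and ssum: "\<forall>c<K. \<forall>x<m. (\<Sum>a<n. s c x a) = 1"
    and min0: "\<forall>c<K. \<forall>x<m. (\<Sum>a<n. ent_term (s c 0 a)) \<le> (\<Sum>a<n. ent_term (s c x a))"
  shows "meas_entropy S2 p = (\<Sum>c<K. ent_term (P c) + P c * (\<Sum>a<n. ent_term (s c 0 a)))"
proof (rule antisym)
  show "meas_entropy S2 p \<le> (\<Sum>c<K. ent_term (P c) + P c * (\<Sum>a<n. ent_term (s c 0 a)))"
    using me_upper[OF st Kc_meas] Kc_entropy[OF pf Pnn snn ssum] by simp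
  show "(\<Sum>c<K. ent_term (P c) + P c * (\<Sum>a<n. ent_term (s c 0 a))) \<le> meas_entropy S2 p"
    by (rule me_lower[OF Kc_meas]) (rule L4[OF _ st pf Pnn snn ssum min0])
qed

end


declare sum.lessThan_Suc[simp del]

definition EE :: "real \<Rightarrow> nat \<Rightarrow> real" where
  "EE t N = ent_term (1 - t) + real N * ent_term (t / real N)"

lemma sum_Suc_rest: "(\<Sum>i<Suc N. f i) = f 0 + (\<Sum>i<N. f (Suc i))"
  by (rule sum.lessThan_Suc_shift)

lemma EE_alt:
  assumes "0 \<le> t" "t \<le> 1" "1 \<le> N"
  shows "EE t N = ent_term (1 - t) + ent_term t + t * log 2 N"
proof (cases "t = 0")
  case True then show ?thesis by (simp add: EE_def)
next
  case False
  then have t: "t > 0" using assms by simp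
  have N: "real N > 0" using assms by simp
  have tn: "\<not> t / real N \<le> 0" using t N by (simp add: not_le)
  have "real N * ent_term (t / real N) = - t * log 2 (t / real N)"
    using t N tn by (simp add: ent_term_def)
  also have "\<dots> = ent_term t + t * log 2 N"
    using t N by (simp add: ent_term_def log_divide algebra_simps)
  finally show ?thesis by (simp add: EE_def)
qed

lemma EE_mono:
  assumes "0 \<le> t" "t \<le> 1/2" "1 \<le> N"
  shows "EE t N \<le> EE (1 - t) N"
proof -
  have "log 2 N \<ge> 0" using assms by simp
  then have "t * log 2 N \<le> (1 - t) * log 2 N" using assms by (intro mult_right_mono) auto
  then show ?thesis using assms by (simp add: EE_alt)
qed

context constr begin

definition sX :: "nat \<Rightarrow> nat \<Rightarrow> real" where "sX x0 a0 = (\<Sum>B<Suc NB. PB B * fX a0 x0 B)"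
definition sY :: "nat \<Rightarrow> nat \<Rightarrow> nat \<Rightarrow> real" where "sY B y a2 = (\<Sum>A<Suc NA. PA A * gY a2 y A B)"

lemma sX_alt: "sX x0 a0 = (1 - sB) * fX a0 x0 0 + sB * fX a0 x0 1"
proof -
  have "sX x0 a0 = PB 0 * fX a0 x0 0 + (\<Sum>B<NB. PB (Suc B) * fX a0 x0 (Suc B))"
    unfolding sX_def by (rule sum_Suc_rest)
  also have "(\<Sum>B<NB. PB (Suc B) * fX a0 x0 (Suc B)) = (\<Sum>B<NB. sB / NB * fX a0 x0 1)"
    by (intro sum.cong refl) (simp add: PB_def fX_def bt_def)
  also have "\<dots> = sB * fX a0 x0 1" using NB by simp
  finally show ?thesis by (simp add: PB_def)
qed

lemma sY_alt: "sY B y a2 = (1 - sA) * gY a2 y 0 B + sA * gY a2 y 1 B"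
proof -
  have "sY B y a2 = PA 0 * gY a2 y 0 B + (\<Sum>A<NA. PA (Suc A) * gY a2 y (Suc A) B)"
    unfolding sY_def by (rule sum_Suc_rest)
  also have "(\<Sum>A<NA. PA (Suc A) * gY a2 y (Suc A) B) = (\<Sum>A<NA. sA / NA * gY a2 y 1 B)"
    by (intro sum.cong refl) (simp add: PA_def gY_def bt_def)
  also have "\<dots> = sA * gY a2 y 1 B" using NA by simp
  finally show ?thesis by (simp add: PA_def)
qed

lemma redL: "a0 < Suc Nv \<Longrightarrow> A < Suc NA \<Longrightarrow> x0 < 2 \<Longrightarrow> reduce_left SX SY pj [a0,A] [x0,0] = PA A * sX x0 a0"
proof -
  assume a: "a0 < Suc Nv" "A < Suc NA" "x0 < 2"
  have "reduce_left SX SY pj [a0,A] [x0,0] = (\<Sum>a2<Suc (Suc Nu). \<Sum>B<Suc NB. pj [a0,A,a2,B] [x0,0,0,0])"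
    using a by (simp add: reduce_left_def outputs_Cons_iff inputs_Cons_iff sum_outputs_Cons numeral_2_eq_2)
  also have "\<dots> = (\<Sum>a2<Suc (Suc Nu). \<Sum>B<Suc NB. PA A * PB B * fX a0 x0 B * gY a2 0 A B)"
    using a by (intro sum.cong refl) (simp add: pj_val)
  also have "\<dots> = (\<Sum>B<Suc NB. \<Sum>a2<Suc (Suc Nu). PA A * PB B * fX a0 x0 B * gY a2 0 A B)"
    by (rule sum.swap)
  also have "\<dots> = (\<Sum>B<Suc NB. PA A * PB B * fX a0 x0 B)"
    by (intro sum.cong refl) (simp add: sum_distrib_left[symmetric] gY_sum)
  also have "\<dots> = PA A * sX x0 a0" by (simp add: sX_def sum_distrib_left mult_ac)
  finally show ?thesis .
qed

lemma redR: "a2 < Suc (Suc Nu) \<Longrightarrow> B < Suc NB \<Longrightarrow> y < 2 \<Longrightarrow> reduce_right SX SY pj [a2,B] [y,0] = PB B * sY B y a2"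
proof -
  assume a: "a2 < Suc (Suc Nu)" "B < Suc NB" "y < 2"
  have "reduce_right SX SY pj [a2,B] [y,0] = (\<Sum>a0<Suc Nv. \<Sum>A<Suc NA. pj [a0,A,a2,B] [0,0,y,0])"
    using a by (simp add: reduce_right_def outputs_Cons_iff inputs_Cons_iff sum_outputs_Cons numeral_2_eq_2)
  also have "\<dots> = (\<Sum>a0<Suc Nv. \<Sum>A<Suc NA. PA A * PB B * fX a0 0 B * gY a2 y A B)"
    using a by (intro sum.cong refl) (simp add: pj_val)
  also have "\<dots> = (\<Sum>A<Suc NA. \<Sum>a0<Suc Nv. PA A * PB B * gY a2 y A B * fX a0 0 B)"
    by (subst sum.swap) (simp add: mult_ac)
  also have "\<dots> = (\<Sum>A<Suc NA. PA A * PB B * gY a2 y A B)"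
    by (intro sum.cong refl) (simp add: sum_distrib_left[symmetric] fX_sum)
  also have "\<dots> = PB B * sY B y a2" by (simp add: sY_def sum_distrib_left mult_ac)
  finally show ?thesis .
qed

lemma sX0: "sX 0 a0 = (if a0 = 0 then 1 - sB else sB / Nv)"
  unfolding sX_alt by (simp add: fX_def bt_def)
lemma sX1: "sX 1 a0 = (if a0 = 0 then sB else (1 - sB) / Nv)"
  unfolding sX_alt by (simp add: fX_def bt_def)
lemma sY0: "sY B 0 a2 = (if a2 = bt B then 1 - sA else if a2 < 2 then 0 else sA / Nu)"
  unfolding sY_alt using bt_cases[of B] by (auto simp: gY_def bt_def)
lemma sY1: "sY B 1 a2 = (if a2 = bt B then sA else if a2 < 2 then 0 else (1 - sA) / Nu)"
  unfolding sY_alt using bt_cases[of B] by (auto simp: gY_def bt_def)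

lemma sX_nn: "0 \<le> sX x0 a0" unfolding sX_def by (intro sum_nonneg mult_nonneg_nonneg PB_nn fX_nn)
lemma sY_nn: "0 \<le> sY B y a2" unfolding sY_def by (intro sum_nonneg mult_nonneg_nonneg PA_nn gY_nn)

lemma sX_sum: "(\<Sum>a0<Suc Nv. sX x0 a0) = 1"
proof -
  have "(\<Sum>a0<Suc Nv. sX x0 a0) = (\<Sum>B<Suc NB. PB B * (\<Sum>a0<Suc Nv. fX a0 x0 B))"
    unfolding sX_def sum_distrib_left by (rule sum.swap)
  also have "\<dots> = 1" by (simp add: fX_sum PB_sum)
  finally show ?thesis .
qed

lemma sY_sum: "(\<Sum>a2<Suc (Suc Nu). sY B y a2) = 1"
proof -
  have "(\<Sum>a2<Suc (Suc Nu). sY B y a2) = (\<Sum>A<Suc NA. PA A * (\<Sum>a2<Suc (Suc Nu). gY a2 y A B))"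
    unfolding sY_def sum_distrib_left by (rule sum.swap)
  also have "\<dots> = 1" by (simp add: gY_sum PA_sum)
  finally show ?thesis .
qed

lemma HX0: "(\<Sum>a0<Suc Nv. ent_term (sX 0 a0)) = EE sB Nv"
  unfolding sum_Suc_rest sX0 EE_def by simp
lemma HX1: "(\<Sum>a0<Suc Nv. ent_term (sX 1 a0)) = EE (1 - sB) Nv"
  unfolding sum_Suc_rest sX1 EE_def by simp

lemma sum_Suc2: "(\<Sum>i<Suc (Suc N). f i) = f 0 + f 1 + (\<Sum>i<N. f (Suc (Suc i)) :: real)"
  by (simp add: sum_Suc_rest add.assoc)

lemma HY0: "(\<Sum>a2<Suc (Suc Nu). ent_term (sY B 0 a2)) = EE sA Nu"
  unfolding sum_Suc2 sY0 EE_def using bt_cases[of B] by auto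
lemma HY1: "(\<Sum>a2<Suc (Suc Nu). ent_term (sY B 1 a2)) = EE (1 - sA) Nu"
  unfolding sum_Suc2 sY1 EE_def using bt_cases[of B] by auto

lemma HA: "(\<Sum>A<Suc NA. ent_term (PA A)) = EE sA NA"
  unfolding sum_Suc_rest PA_def EE_def by simp
lemma HB: "(\<Sum>B<Suc NB. ent_term (PB B)) = EE sB NB"
  unfolding sum_Suc_rest PB_def EE_def by simp

theorem meX:
  assumes sB2: "sB \<le> 1/2"
  shows "meas_entropy SX (reduce_left SX SY pj) = EE sA NA + EE sB Nv"
proof -
  interpret tX: twobox 2 "Suc Nv" "Suc NA" by unfold_locales auto
  have pf: "\<forall>a<Suc Nv. \<forall>c<Suc NA. \<forall>x<2. reduce_left SX SY pj [a,c] [x,0] = PA c * sX x a"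
    using redL by blast
  have st: "is_state SX (reduce_left SX SY pj)"
  proof (rule tX.prod_state[OF _ pf])
    fix a x assume "\<not> (a \<in> outputs SX \<and> x \<in> inputs SX)"
    then show "reduce_left SX SY pj a x = 0" unfolding reduce_left_def by auto
  qed (use PA_nn sX_nn PA_sum sX_sum in auto)
  have "meas_entropy SX (reduce_left SX SY pj) = (\<Sum>c<Suc NA. ent_term (PA c) + PA c * (\<Sum>a<Suc Nv. ent_term (sX 0 a)))"
  proof (rule tX.me_twobox[OF st pf])
    show "\<forall>c<Suc NA. \<forall>x<2. (\<Sum>a<Suc Nv. ent_term (sX 0 a)) \<le> (\<Sum>a<Suc Nv. ent_term (sX x a))"
    proof (intro allI impI)
      fix c x :: nat assume "x < 2"
      then have "x = 0 \<or> x = 1" by auto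
      moreover have "EE sB Nv \<le> EE (1 - sB) Nv" using EE_mono[of sB Nv] sB sB2 Nv by simp
      ultimately show "(\<Sum>a<Suc Nv. ent_term (sX 0 a)) \<le> (\<Sum>a<Suc Nv. ent_term (sX x a))"
        using HX0 HX1 by auto
    qed
  qed (use PA_nn sX_nn sX_sum in auto)
  also have "\<dots> = EE sA NA + EE sB Nv"
    by (simp add: sum.distrib sum_distrib_right[symmetric] PA_sum HA HX0)
  finally show ?thesis .
qed

theorem meY:
  assumes sA2: "sA \<le> 1/2"
  shows "meas_entropy SY (reduce_right SX SY pj) = EE sB NB + EE sA Nu"
proof -
  interpret tY: twobox 2 "Suc (Suc Nu)" "Suc NB" by unfold_locales auto
  have pf: "\<forall>a<Suc (Suc Nu). \<forall>c<Suc NB. \<forall>x<2. reduce_right SX SY pj [a,c] [x,0] = PB c * sY c x a"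
    using redR by blast
  have st: "is_state SY (reduce_right SX SY pj)"
  proof (rule tY.prod_state[OF _ pf])
    fix a x assume "\<not> (a \<in> outputs SY \<and> x \<in> inputs SY)"
    then show "reduce_right SX SY pj a x = 0" unfolding reduce_right_def by auto
  qed (use PB_nn sY_nn PB_sum sY_sum in auto)
  have "meas_entropy SY (reduce_right SX SY pj) = (\<Sum>c<Suc NB. ent_term (PB c) + PB c * (\<Sum>a<Suc (Suc Nu). ent_term (sY c 0 a)))"
  proof (rule tY.me_twobox[OF st pf])
    show "\<forall>c<Suc NB. \<forall>x<2. (\<Sum>a<Suc (Suc Nu). ent_term (sY c 0 a)) \<le> (\<Sum>a<Suc (Suc Nu). ent_term (sY c x a))"
    proof (intro allI impI)
      fix c x :: nat assume "x < 2"
      then have "x = 0 \<or> x = 1" by auto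
      moreover have "EE sA Nu \<le> EE (1 - sA) Nu" using EE_mono[of sA Nu] sA sA2 Nu by simp
      ultimately show "(\<Sum>a<Suc (Suc Nu). ent_term (sY c 0 a)) \<le> (\<Sum>a<Suc (Suc Nu). ent_term (sY c x a))"
        using HY0 HY1 by auto
    qed
  qed (use PB_nn sY_nn sY_sum in auto)
  also have "\<dots> = EE sB NB + EE sA Nu"
    by (simp add: sum.distrib sum_distrib_right[symmetric] PB_sum HB HY0)
  finally show ?thesis .
qed

end


declare sum.lessThan_Suc[simp del]

context constr begin

lemma HAB: "(\<Sum>A<Suc NA. \<Sum>B<Suc NB. ent_term (PA A * PB B)) = EE sA NA + EE sB NB"
proof -
  have "(\<Sum>A<Suc NA. \<Sum>B<Suc NB. ent_term (PA A * PB B)) = (\<Sum>A<Suc NA. \<Sum>B<Suc NB. PB B * ent_term (PA A) + PA A * ent_term (PB B))"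
    by (intro sum.cong refl ent_term_mult PA_nn PB_nn)
  also have "\<dots> = (\<Sum>A<Suc NA. ent_term (PA A) * (\<Sum>B<Suc NB. PB B) + PA A * (\<Sum>B<Suc NB. ent_term (PB B)))"
    by (simp add: sum.distrib sum_distrib_left sum_distrib_right mult_ac)
  also have "\<dots> = (\<Sum>A<Suc NA. ent_term (PA A)) + (\<Sum>A<Suc NA. PA A) * (\<Sum>B<Suc NB. ent_term (PB B))"
    by (simp add: PB_sum sum.distrib sum_distrib_right)
  also have "\<dots> = EE sA NA + EE sB NB" by (simp add: HA HB PA_sum)
  finally show ?thesis .
qed

lemma vS4: "valid_sys S4" by (simp add: valid_sys_def)

definition xw :: "nat list \<Rightarrow> nat list" where
  "xw a = [if a!2 = 1 then 1 else 0, 0, bt (a!1), 0]"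

definition Kw :: "(nat list \<times> nat list) set" where
  "Kw = (\<lambda>a. (a, xw a)) ` outputs S4"

lemma xw_in: "xw a \<in> inputs S4"
  by (simp add: xw_def inputs_Cons_iff)

lemma valid4: "valid_strat S4 \<alpha> \<Longrightarrow> (\<forall>y<2. \<alpha> 0 y < Suc Nv) \<and> \<alpha> (Suc 0) 0 < Suc NA \<and> (\<forall>y<2. \<alpha> 2 y < Suc (Suc Nu)) \<and> \<alpha> 3 0 < Suc NB"
proof -
  assume va: "valid_strat S4 \<alpha>"
  have h: "\<And>i y. i < 4 \<Longrightarrow> y < fst (S4!i) \<Longrightarrow> \<alpha> i y < snd (S4!i)" using va by (simp add: valid_strat_def)
  have "\<forall>y<2. \<alpha> 0 y < Suc Nv" using h[of 0] by simp
  moreover have "\<alpha> (Suc 0) 0 < Suc NA" using h[of "Suc 0" 0] by simp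
  moreover have "\<forall>y<2. \<alpha> 2 y < Suc (Suc Nu)" using h[of 2] by simp
  moreover have "\<alpha> 3 0 < Suc NB" using h[of 3 0] by (simp add: numeral_3_eq_3)
  ultimately show ?thesis by blast
qed

lemma Kw_meas: "maximally_informative S4 (to_nat ` Kw) coordM"
proof (rule coord_meas_maxinf[OF vS4])
  show "finite Kw" by (simp add: Kw_def)
  show "Kw \<subseteq> outputs S4 \<times> inputs S4" using xw_in by (auto simp: Kw_def)
  show "\<forall>\<alpha>. valid_strat S4 \<alpha> \<longrightarrow> card {k \<in> Kw. fst k = outf \<alpha> (snd k)} = 1"
  proof (intro allI impI)
    fix \<alpha> assume va: "valid_strat S4 \<alpha>"
    note v = valid4[OF va]
    define a2 where "a2 = \<alpha> 2 (bt (\<alpha> 1 0))"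
    define astar where "astar = [\<alpha> 0 (if a2 = 1 then 1 else 0), \<alpha> 1 0, a2, \<alpha> 3 0]"
    have "{k \<in> Kw. fst k = outf \<alpha> (snd k)} = {(astar, xw astar)}"
    proof (intro set_eqI iffI)
      fix k assume "k \<in> {k \<in> Kw. fst k = outf \<alpha> (snd k)}"
      then obtain a where a: "a \<in> outputs S4" and k: "k = (a, xw a)" and eq: "a = outf \<alpha> (xw a)"
        by (auto simp: Kw_def)
      have eq2: "a = [\<alpha> 0 (if a!2 = 1 then 1 else 0), \<alpha> 1 0, \<alpha> 2 (bt (a!1)), \<alpha> 3 0]"
        using eq by (simp add: xw_def outf_Cons4)
      then have "a!1 = \<alpha> 1 0" by (metis nth_Cons_0 nth_Cons_Suc One_nat_def)
      then have "a!2 = a2" using eq2 unfolding a2_def by (metis nth_Cons_0 nth_Cons_Suc numeral_2_eq_2)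
      then have "a = astar" using eq2 \<open>a!1 = \<alpha> 1 0\<close> unfolding astar_def by simp
      then show "k \<in> {(astar, xw astar)}" using k by simp
    next
      fix k assume "k \<in> {(astar, xw astar)}"
      then have k: "k = (astar, xw astar)" by simp
      have ao: "astar \<in> outputs S4" using v by (auto simp: astar_def a2_def outputs_Cons_iff bt_def)
      have "astar = outf \<alpha> (xw astar)" by (simp add: astar_def xw_def outf_Cons4 a2_def)
      then show "k \<in> {k \<in> Kw. fst k = outf \<alpha> (snd k)}" using k ao by (auto simp: Kw_def)
    qed
    then show "card {k \<in> Kw. fst k = outf \<alpha> (snd k)} = 1" by simp
  qed
qed

lemma Kw_entropy: "(\<Sum>r\<in>to_nat ` Kw. ent_term (lin_apply S4 (coordM r) pj)) = EE sA NA + EE sB NB"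
proof -
  have inj: "inj_on to_nat Kw" by (meson inj_on_subset inj_to_nat subset_UNIV)
  have inj2: "inj_on (\<lambda>a. (a, xw a)) (outputs S4)" by (auto simp: inj_on_def)
  have "(\<Sum>r\<in>to_nat ` Kw. ent_term (lin_apply S4 (coordM r) pj)) = (\<Sum>k\<in>Kw. ent_term (lin_apply S4 (coordM (to_nat k)) pj))"
    by (rule sum.reindex[OF inj, unfolded comp_def])
  also have "\<dots> = (\<Sum>a\<in>outputs S4. ent_term (lin_apply S4 (coordM (to_nat (a, xw a))) pj))"
    unfolding Kw_def by (rule sum.reindex[OF inj2, unfolded comp_def])
  also have "\<dots> = (\<Sum>a\<in>outputs S4. ent_term (pj a (xw a)))"
    using xw_in by (intro sum.cong refl) (simp add: coordM_to_nat lin_apply_coord)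
  also have "\<dots> = (\<Sum>a0<Suc Nv. \<Sum>A<Suc NA. \<Sum>a2<Suc (Suc Nu). \<Sum>B<Suc NB.
       (if a0 = 0 \<and> a2 = bt B then ent_term (PA A * PB B) else 0))"
    unfolding sum_out4
  proof (intro sum.cong refl)
    fix a0 A a2 B assume a: "a0 \<in> {..<Suc Nv}" "A \<in> {..<Suc NA}" "a2 \<in> {..<Suc (Suc Nu)}" "B \<in> {..<Suc NB}"
    have "pj [a0,A,a2,B] (xw [a0,A,a2,B]) = PA A * PB B * fX a0 (if a2 = 1 then 1 else 0) B * gY a2 (bt A) A B"
      using a by (simp add: xw_def pj_val)
    also have "\<dots> = (if a0 = 0 \<and> a2 = bt B then PA A * PB B else 0)"
      using bt_cases[of B] by (auto simp: fX_def gY_def)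
    finally show "ent_term (pj [a0,A,a2,B] (xw [a0,A,a2,B])) = (if a0 = 0 \<and> a2 = bt B then ent_term (PA A * PB B) else 0)"
      by simp
  qed
  also have "\<dots> = (\<Sum>A<Suc NA. \<Sum>B<Suc NB. \<Sum>a0<Suc Nv. \<Sum>a2<Suc (Suc Nu).
       (if a0 = 0 \<and> a2 = bt B then ent_term (PA A * PB B) else 0))"
    by (rule sum4_reorder)
  also have "\<dots> = (\<Sum>A<Suc NA. \<Sum>B<Suc NB. ent_term (PA A * PB B))"
  proof (intro sum.cong refl)
    fix A B
    have "bt B < Suc (Suc Nu)" using bt_lt2[of B] by linarith
    then have i: "(\<Sum>a2<Suc (Suc Nu). (if a0 = 0 \<and> a2 = bt B then ent_term (PA A * PB B) else 0)) = (if a0 = 0 then ent_term (PA A * PB B) else 0)" for a0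
      by (cases "a0 = 0") (simp_all add: sum.delta')
    show "(\<Sum>a0<Suc Nv. \<Sum>a2<Suc (Suc Nu). (if a0 = 0 \<and> a2 = bt B then ent_term (PA A * PB B) else 0)) = ent_term (PA A * PB B)"
      unfolding i by (simp add: sum.delta)
  qed
  also have "\<dots> = EE sA NA + EE sB NB" by (rule HAB)
  finally show ?thesis .
qed

lemma rep4: "replicate (length S4) (0::nat) = [0,0,0,0]" by (simp add: numeral_eq_Suc)

lemma cls4: "cls [Suc 0, 3] [a0,a1,a2,a3] = [a1,a3]"
  by (simp add: cls_def numeral_3_eq_3)

lemma QQ4: "A < Suc NA \<Longrightarrow> B < Suc NB \<Longrightarrow> QQ S4 [Suc 0, 3] pj [A,B] = PA A * PB B"
proof -
  assume AB: "A < Suc NA" "B < Suc NB"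
  have "QQ S4 [Suc 0, 3] pj [A,B] = (\<Sum>a0<Suc Nv. \<Sum>a1<Suc NA. \<Sum>a2<Suc (Suc Nu). \<Sum>a3<Suc NB.
      (if a1 = A \<and> a3 = B then pj [a0,a1,a2,a3] [0,0,0,0] else 0))"
    unfolding QQ_def sum_out4 rep4 by (simp add: restr_def cls4)
  also have "\<dots> = (\<Sum>a1<Suc NA. \<Sum>a3<Suc NB. \<Sum>a0<Suc Nv. \<Sum>a2<Suc (Suc Nu).
      (if a1 = A \<and> a3 = B then pj [a0,a1,a2,a3] [0,0,0,0] else 0))"
    by (rule sum4_reorder)
  also have "\<dots> = (\<Sum>a1<Suc NA. \<Sum>a3<Suc NB. (if a1 = A \<and> a3 = B then (\<Sum>a0<Suc Nv. \<Sum>a2<Suc (Suc Nu). pj [a0,a1,a2,a3] [0,0,0,0]) else 0))"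
    by (intro sum.cong refl) auto
  also have "\<dots> = (\<Sum>a0<Suc Nv. \<Sum>a2<Suc (Suc Nu). pj [a0,A,a2,B] [0,0,0,0])"
  proof -
    have "(\<Sum>a3<Suc NB. (if a1 = A \<and> a3 = B then (\<Sum>a0<Suc Nv. \<Sum>a2<Suc (Suc Nu). pj [a0,a1,a2,a3] [0,0,0,0]) else 0))
        = (if a1 = A then (\<Sum>a0<Suc Nv. \<Sum>a2<Suc (Suc Nu). pj [a0,a1,a2,B] [0,0,0,0]) else 0)" for a1
      using AB by (cases "a1 = A") (simp_all add: sum.delta')
    then show ?thesis using AB by (simp add: sum.delta')
  qed
  also have "\<dots> = (\<Sum>a0<Suc Nv. \<Sum>a2<Suc (Suc Nu). PA A * PB B * (fX a0 0 B * gY a2 0 A B))"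
    using AB by (intro sum.cong refl) (simp add: pj_val mult_ac)
  also have "\<dots> = PA A * PB B * ((\<Sum>a0<Suc Nv. fX a0 0 B) * (\<Sum>a2<Suc (Suc Nu). gY a2 0 A B))"
  proof -
    have "PA A * PB B * ((\<Sum>a0<Suc Nv. fX a0 0 B) * (\<Sum>a2<Suc (Suc Nu). gY a2 0 A B))
        = PA A * PB B * (\<Sum>a0<Suc Nv. \<Sum>a2<Suc (Suc Nu). fX a0 0 B * gY a2 0 A B)"
      by (simp only: sum_product)
    also have "\<dots> = (\<Sum>a0<Suc Nv. \<Sum>a2<Suc (Suc Nu). PA A * PB B * (fX a0 0 B * gY a2 0 A B))"
      by (simp only: sum_distrib_left)
    finally show ?thesis by simp
  qed
  also have "\<dots> = PA A * PB B" by (simp add: fX_sum gY_sum)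
  finally show ?thesis .
qed

theorem meZ: "meas_entropy S4 pj = EE sA NA + EE sB NB"
proof (rule antisym)
  show "meas_entropy S4 pj \<le> EE sA NA + EE sB NB"
    using me_upper[OF pj_state Kw_meas] Kw_entropy by simp
  interpret ci: classical_idx S4 "[Suc 0, 3]" by unfold_locales (simp_all add: vS4)
  have cl: "ci.Classes = (\<lambda>(A,B). [A,B]) ` ({..<Suc NA} \<times> {..<Suc NB})"
  proof (intro set_eqI iffI)
    fix c assume "c \<in> ci.Classes"
    then obtain a where a: "a \<in> outputs S4" and c: "c = cls [Suc 0, 3] a" by (auto simp: ci.Classes_def)
    then obtain a0 a1 a2 a3 where "a = [a0,a1,a2,a3]" "a1 < Suc NA" "a3 < Suc NB" using out4 by blast
    then show "c \<in> (\<lambda>(A,B). [A,B]) ` ({..<Suc NA} \<times> {..<Suc NB})" using c by (auto simp: cls4)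
  next
    fix c assume "c \<in> (\<lambda>(A,B). [A,B]) ` ({..<Suc NA} \<times> {..<Suc NB})"
    then obtain A B where AB: "A < Suc NA" "B < Suc NB" "c = [A,B]" by auto
    have "[0,A,0,B] \<in> outputs S4" using AB by (simp add: outputs_Cons_iff)
    moreover have "c = cls [Suc 0, 3] [0,A,0,B]" using AB by (simp add: cls4)
    ultimately show "c \<in> ci.Classes" by (auto simp: ci.Classes_def)
  qed
  have inj: "inj_on (\<lambda>(A,B). [A::nat,B]) X" for X by (auto simp: inj_on_def)
  have lhs: "(\<Sum>c\<in>ci.Classes. ent_term (QQ S4 [Suc 0, 3] pj c)) = EE sA NA + EE sB NB"
  proof -
    have "(\<Sum>c\<in>ci.Classes. ent_term (QQ S4 [Suc 0, 3] pj c))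
        = (\<Sum>AB\<in>{..<Suc NA} \<times> {..<Suc NB}. ent_term (QQ S4 [Suc 0, 3] pj ((\<lambda>(A,B). [A,B]) AB)))"
      unfolding cl by (rule sum.reindex[OF inj, unfolded comp_def])
    also have "\<dots> = (\<Sum>A<Suc NA. \<Sum>B<Suc NB. ent_term (PA A * PB B))"
      unfolding sum_pair by (intro sum.cong refl) (simp add: QQ4)
    also have "\<dots> = EE sA NA + EE sB NB" by (rule HAB)
    finally show ?thesis .
  qed
  show "EE sA NA + EE sB NB \<le> meas_entropy S4 pj"
    by (rule me_lower[OF Kw_meas]) (use ci.L5[OF _ pj_state] lhs in simp)
qed

end


definition Eset :: "(real \<times> real \<times> real) set" where
  "Eset = {(meas_entropy SX (reduce_left SX SY p),
                  meas_entropy SY (reduce_right SX SY p),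
                  meas_entropy (SX @ SY) p) | SX SY p.
                 valid_sys SX \<and> valid_sys SY \<and> SX \<noteq> [] \<and> SY \<noteq> [] \<and> is_state (SX @ SY) p}"

context constr begin

lemma point_mem:
  assumes "sA \<le> 1/2" "sB \<le> 1/2"
  shows "(EE sA NA + EE sB Nv, EE sB NB + EE sA Nu, EE sA NA + EE sB NB) \<in> Eset"
proof -
  have "valid_sys SX" "valid_sys SY" by (simp_all add: valid_sys_def)
  moreover have "is_state (SX @ SY) pj" using pj_state by simp
  moreover have "meas_entropy (SX @ SY) pj = EE sA NA + EE sB NB" using meZ by simp
  ultimately show ?thesis unfolding Eset_def using meX[OF assms(2)] meY[OF assms(1)]
    by (intro CollectI exI[of _ SX] exI[of _ SY] exI[of _ pj]) auto
qed


end

lemma EE_pow: "0 \<le> t \<Longrightarrow> t \<le> 1 \<Longrightarrow> EE t (2^k) = ent_term (1 - t) + ent_term t + t * real k"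
  using EE_alt[of t "2^k"] by (simp add: log_nat_power)

lemma ent_small: 
  assumes "0 \<le> a" shows "(\<lambda>n. ent_term (a / real n)) \<longlonglongrightarrow> 0"
proof (cases "a = 0")
  case True then show ?thesis by simp
next
  case False
  then have a: "a > 0" using assms by simp
  have lim: "(\<lambda>n. (a / ln 2) * (ln (real n) / real n) - (a * ln a / ln 2) * (1 / real n)) \<longlonglongrightarrow> (a / ln 2) * 0 - (a * ln a / ln 2) * 0"
    by (intro tendsto_intros)
  have ev: "eventually (\<lambda>n. (a / ln 2) * (ln (real n) / real n) - (a * ln a / ln 2) * (1 / real n) = ent_term (a / real n)) sequentially"
  proof (rule eventually_sequentiallyI[of 1])
    fix n :: nat assume n: "1 \<le> n"
    then have np: "real n > 0" by simp
    have nl: "\<not> a / real n \<le> 0" using a np by (simp add: not_le)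
    show "(a / ln 2) * (ln (real n) / real n) - (a * ln a / ln 2) * (1 / real n) = ent_term (a / real n)"
      using a np nl by (simp add: ent_term_def log_def ln_div field_simps)
  qed
  show ?thesis using Lim_transform_eventually[OF lim ev] by simp
qed

lemma ent_near1:
  assumes "0 \<le> a" shows "(\<lambda>n. ent_term (1 - a / real n)) \<longlonglongrightarrow> 0"
proof -
  have lim: "(\<lambda>n. - (1 - a / real n) * log 2 (1 - a / real n)) \<longlonglongrightarrow> - (1 - 0) * log 2 (1 - 0)"
    by (intro tendsto_intros) auto
  obtain N :: nat where N: "a < real N" using reals_Archimedean2 by blast
  have ev: "eventually (\<lambda>n. - (1 - a / real n) * log 2 (1 - a / real n) = ent_term (1 - a / real n)) sequentially"
  proof (rule eventually_sequentiallyI[of "Suc N"])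
    fix n :: nat assume n: "Suc N \<le> n"
    then have np: "real n > a" "real n > 0" using N assms by linarith+
    then have "a / real n < 1" by simp
    then have "\<not> 1 - a / real n \<le> 0" by simp
    then show "- (1 - a / real n) * log 2 (1 - a / real n) = ent_term (1 - a / real n)"
      by (simp add: ent_term_def)
  qed
  show ?thesis using Lim_transform_eventually[OF lim ev] by simp
qed

lemma ceil_lim:
  assumes "0 \<le> c" shows "(\<lambda>n. real (nat \<lceil>real n * c\<rceil>) / real n) \<longlonglongrightarrow> c"
proof (rule tendsto_sandwich[of "\<lambda>_. c" _ _ "\<lambda>n. c + 1 / real n"])
  show "eventually (\<lambda>n. c \<le> real (nat \<lceil>real n * c\<rceil>) / real n) sequentially"
  proof (rule eventually_sequentiallyI[of 1])
    fix n :: nat assume "1 \<le> n"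
    then have np: "real n > 0" by simp
    have c0: "0 \<le> real n * c" using assms by simp
    then have "real (nat \<lceil>real n * c\<rceil>) = real_of_int \<lceil>real n * c\<rceil>" by simp
    moreover have "real n * c \<le> real_of_int \<lceil>real n * c\<rceil>" by (rule le_of_int_ceiling)
    ultimately have "real n * c \<le> real (nat \<lceil>real n * c\<rceil>)" by simp
    then show "c \<le> real (nat \<lceil>real n * c\<rceil>) / real n" using np by (simp add: field_simps)
  qed
  show "eventually (\<lambda>n. real (nat \<lceil>real n * c\<rceil>) / real n \<le> c + 1 / real n) sequentially"
  proof (rule eventually_sequentiallyI[of 1])
    fix n :: nat assume "1 \<le> n"
    then have np: "real n > 0" by simp
    have c0: "0 \<le> real n * c" using assms by simp
    then have "real (nat \<lceil>real n * c\<rceil>) = real_of_int \<lceil>real n * c\<rceil>" by simp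
    also have "\<dots> \<le> real n * c + 1" by (rule of_int_ceiling_le_add_one)
    finally show "real (nat \<lceil>real n * c\<rceil>) / real n \<le> c + 1 / real n" using np by (simp add: field_simps)
  qed
  show "(\<lambda>_. c) \<longlonglongrightarrow> c" by simp
  have "(\<lambda>n. c + 1 / real n) \<longlonglongrightarrow> c + 0" by (intro tendsto_intros)
  then show "(\<lambda>n. c + 1 / real n) \<longlonglongrightarrow> c" by simp
qed

lemma EE_lim_term:
  assumes a: "0 < a" and c: "0 \<le> c"
  shows "(\<lambda>j. ent_term (1 - a / real j) + ent_term (a / real j) + a * (real (nat \<lceil>real j * c\<rceil>) / real j)) \<longlonglongrightarrow> a * c"
proof -
  have "(\<lambda>j. ent_term (1 - a / real j) + ent_term (a / real j) + a * (real (nat \<lceil>real j * c\<rceil>) / real j)) \<longlonglongrightarrow> 0 + 0 + a * c"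
    using a c by (intro tendsto_intros ent_near1 ent_small ceil_lim) auto
  then show ?thesis by simp
qed

lemma EE_eq_term:
  assumes a: "0 < a" and j: "a \<le> real j" "1 \<le> j"
  shows "EE (a / real j) (2 ^ k) = ent_term (1 - a / real j) + ent_term (a / real j) + a * (real k / real j)"
proof -
  have "0 \<le> a / real j" "a / real j \<le> 1" using a j by (auto simp: field_simps)
  then show ?thesis using j by (simp add: EE_pow)
qed

theorem interior_in:
  assumes x: "0 < x" and y: "0 < y" and z: "0 < z" and zxy: "z < x + y"
  shows "(x, y, z) \<in> closure Eset"
proof -
  define a where "a = z * x / (x + y)"
  define b where "b = z * y / (x + y)"
  define \<alpha> where "\<alpha> = x - a"
  define \<beta> where "\<beta> = y - b"
  have xy: "0 < x + y" using x y by simp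
  have a0: "0 < a" and b0: "0 < b" using x y z xy by (simp_all add: a_def b_def)
  have "x * z < x * (x + y)" using mult_strict_left_mono[OF zxy x] .
  then have "a < x" unfolding a_def using xy by (simp add: field_simps)
  then have al: "0 < \<alpha>" by (simp add: \<alpha>_def)
  have "y * z < y * (x + y)" using mult_strict_left_mono[OF zxy y] .
  then have "b < y" unfolding b_def using xy by (simp add: field_simps)
  then have be: "0 < \<beta>" by (simp add: \<beta>_def)
  have "a + b = z * (x + y) / (x + y)" unfolding a_def b_def by (simp add: add_divide_distrib[symmetric] ring_distribs)
  then have abz: "a + b = z" using xy by simp
  obtain N0 :: nat where N0: "2 * (a + b) + 1 < real N0" using reals_Archimedean2 by blast
  define kv where "kv j = nat \<lceil>real j * (\<alpha> / b)\<rceil>" for j :: nat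
  define ku where "ku j = nat \<lceil>real j * (\<beta> / a)\<rceil>" for j :: nat
  define X where "X j = EE (a / real j) (2 ^ j) + EE (b / real j) (2 ^ kv j)" for j :: nat
  define Y where "Y j = EE (b / real j) (2 ^ j) + EE (a / real j) (2 ^ ku j)" for j :: nat
  define Z where "Z j = EE (a / real j) (2 ^ j) + EE (b / real j) (2 ^ j)" for j :: nat
  have mem: "(X (n + N0), Y (n + N0), Z (n + N0)) \<in> Eset" for n
  proof -
    define j where "j = n + N0"
    have jb: "2 * (a + b) + 1 < real j" using N0 by (simp add: j_def)
    have ja: "a / real j \<le> 1/2" "b / real j \<le> 1/2" "0 \<le> a / real j" "0 \<le> b / real j"
      using jb a0 b0 by (auto simp: field_simps)
    have ja1: "a / real j \<le> 1" "b / real j \<le> 1" using ja by linarith+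
    interpret constr "2 ^ j" "2 ^ j" "2 ^ ku j" "2 ^ kv j" "a / real j" "b / real j"
      using ja ja1 by unfold_locales auto
    show ?thesis using point_mem[OF ja(1,2)] by (simp add: X_def Y_def Z_def j_def)
  qed
  have ev: "eventually (\<lambda>j. a \<le> real j \<and> b \<le> real j \<and> 1 \<le> j) sequentially"
  proof (rule eventually_sequentiallyI[of N0])
    fix j assume "N0 \<le> j"
    then have "2 * (a + b) + 1 < real j" using N0 by linarith
    then show "a \<le> real j \<and> b \<le> real j \<and> 1 \<le> j" using a0 b0 by auto
  qed
  have cX: "X \<longlonglongrightarrow> x"
  proof -
    have "(\<lambda>j. (ent_term (1 - a / real j) + ent_term (a / real j) + a * (real (nat \<lceil>real j * 1\<rceil>) / real j))
       + (ent_term (1 - b / real j) + ent_term (b / real j) + b * (real (nat \<lceil>real j * (\<alpha> / b)\<rceil>) / real j))) \<longlonglongrightarrow> a * 1 + b * (\<alpha> / b)"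
      using a0 b0 al by (intro tendsto_add EE_lim_term) auto
    moreover have "eventually (\<lambda>j. (ent_term (1 - a / real j) + ent_term (a / real j) + a * (real (nat \<lceil>real j * 1\<rceil>) / real j))
       + (ent_term (1 - b / real j) + ent_term (b / real j) + b * (real (nat \<lceil>real j * (\<alpha> / b)\<rceil>) / real j)) = X j) sequentially"
      using ev by eventually_elim (simp add: X_def kv_def EE_eq_term a0 b0)
    ultimately have "X \<longlonglongrightarrow> a * 1 + b * (\<alpha> / b)" by (rule Lim_transform_eventually)
    then show ?thesis using b0 by (simp add: \<alpha>_def)
  qed
  have cY: "Y \<longlonglongrightarrow> y"
  proof -
    have "(\<lambda>j. (ent_term (1 - b / real j) + ent_term (b / real j) + b * (real (nat \<lceil>real j * 1\<rceil>) / real j))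
       + (ent_term (1 - a / real j) + ent_term (a / real j) + a * (real (nat \<lceil>real j * (\<beta> / a)\<rceil>) / real j))) \<longlonglongrightarrow> b * 1 + a * (\<beta> / a)"
      using a0 b0 be by (intro tendsto_add EE_lim_term) auto
    moreover have "eventually (\<lambda>j. (ent_term (1 - b / real j) + ent_term (b / real j) + b * (real (nat \<lceil>real j * 1\<rceil>) / real j))
       + (ent_term (1 - a / real j) + ent_term (a / real j) + a * (real (nat \<lceil>real j * (\<beta> / a)\<rceil>) / real j)) = Y j) sequentially"
      using ev by eventually_elim (simp add: Y_def ku_def EE_eq_term a0 b0)
    ultimately have "Y \<longlonglongrightarrow> b * 1 + a * (\<beta> / a)" by (rule Lim_transform_eventually)
    then show ?thesis using a0 by (simp add: \<beta>_def)
  qed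
  have cZ: "Z \<longlonglongrightarrow> z"
  proof -
    have "(\<lambda>j. (ent_term (1 - a / real j) + ent_term (a / real j) + a * (real (nat \<lceil>real j * 1\<rceil>) / real j))
       + (ent_term (1 - b / real j) + ent_term (b / real j) + b * (real (nat \<lceil>real j * 1\<rceil>) / real j))) \<longlonglongrightarrow> a * 1 + b * 1"
      using a0 b0 by (intro tendsto_add EE_lim_term) auto
    moreover have "eventually (\<lambda>j. (ent_term (1 - a / real j) + ent_term (a / real j) + a * (real (nat \<lceil>real j * 1\<rceil>) / real j))
       + (ent_term (1 - b / real j) + ent_term (b / real j) + b * (real (nat \<lceil>real j * 1\<rceil>) / real j)) = Z j) sequentially"
      using ev by eventually_elim (simp add: Z_def EE_eq_term a0 b0)
    ultimately have "Z \<longlonglongrightarrow> a * 1 + b * 1" by (rule Lim_transform_eventually)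
    then show ?thesis using abz by simp
  qed
  have "(\<lambda>n. (X (n + N0), Y (n + N0), Z (n + N0))) \<longlonglongrightarrow> (x, y, z)"
    by (intro tendsto_Pair LIMSEQ_ignore_initial_segment cX cY cZ)
  then show ?thesis unfolding closure_sequential using mem
    by (intro exI[of _ "\<lambda>n. (X (n + N0), Y (n + N0), Z (n + N0))"]) simp
qed

theorem main_closure:
  "{(x::real, y::real, z::real). 0 \<le> x \<and> 0 \<le> y \<and> 0 \<le> z \<and> z \<le> x + y} \<subseteq> closure Eset"
proof (clarify)
  fix x y z :: real assume h: "0 \<le> x" "0 \<le> y" "0 \<le> z" "z \<le> x + y"
  define e where "e n = 1 / real (Suc n)" for n
  have epos: "0 < e n" for n by (simp add: e_def)
  have mem: "(x + e n, y + e n, z + e n) \<in> closure Eset" for n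
    using h epos[of n] by (intro interior_in) auto
  have "e \<longlonglongrightarrow> 0" unfolding e_def using LIMSEQ_inverse_real_of_nat by (simp add: inverse_eq_divide)
  then have "(\<lambda>n. (x + e n, y + e n, z + e n)) \<longlonglongrightarrow> (x + 0, y + 0, z + 0)"
    by (intro tendsto_intros)
  then show "(x, y, z) \<in> closure Eset"
    using closed_sequentially[OF closed_closure mem] by simp
qed


theorem theorem7:
  shows "{(x::real, y::real, z::real). 0 \<le> x \<and> 0 \<le> y \<and> 0 \<le> z \<and> z \<le> x + y}
    \<subseteq> closure {(meas_entropy SX (reduce_left SX SY p),
                  meas_entropy SY (reduce_right SX SY p),
                  meas_entropy (SX @ SY) p) | SX SY p.
                 valid_sys SX \<and> valid_sys SY \<and> SX \<noteq> [] \<and> SY \<noteq> [] \<and> is_state (SX @ SY) p}"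
    using main_closure unfolding Eset_def .

end
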